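(* Let $\beta\in[0,\infty)$ and $R\subseteq\Lambda$. Then $$\ker(\mathcal L^{(\beta)}_R)=\{S(\omega)\;:\;S\in\mathcal S_e,\ \omega\in\Omega,\ e\in R\}'=\{Q_R(\omega)\;:\;Q_R\in\mathcal B(\mathcal H_R),\ \omega\in\Omega\}'.$$
   Context: $\Lambda$ is a finite set of edges (of the $N\times N$ torus), each edge $e$ carrying a finite-dimensional Hilbert space $\mathcal H_e=\ell^2(G)$ for a finite Abelian group $G$; $\mathcal H_V=\bigotimes_{e\in V}\mathcal H_e$ and $\mathcal B(\mathcal H_V)$ is identified with $\mathcal B(\mathcal H_V)\otimes1_{\Lambda\setminus V}$. $H_\Lambda$ is the (self-adjoint) quantum double Hamiltonian on $\mathcal H_\Lambda$, $P_\lambda$ its spectral projections, $\Omega$ the set of differences $\lambda-\lambda'$ of its eigenvalues, and for $Q\in\mathcal B(\mathcal H_\Lambda)$, $Q(\omega)=\sum_{\lambda-\lambda'=\omega}P_\lambda QP_{\lambda'}$. For each edge $e$, $\mathcal S_e=\{S_{e,i}:i\in I\}\subset\mathcal B(\mathcal H_e)$ is a finite set closed under adjoints with commutant $\mathbb C1$ in $\mathcal B(\mathcal H_e)$. Rates $h^{(\beta)}_{e,i}(\omega)>0$ satisfy $h^{(\beta)}_{e,i}(-\omega)=h^{(\beta)}_{e,i}(\omega)e^{-\beta\omega}$. $\mathcal L^{(\beta)}_R=\sum_{e\in R}\mathcal D_e$ with $\mathcal D_e(O)=\sum_{i,\omega}h^{(\beta)}_{e,i}(\omega)\big(S_{e,i}(\omega)^\dagger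 OS_{e,i}(\omega)-\tfrac12\{S_{e,i}(\omega)^\dagger S_{e,i}(\omega),O\}\big)$. The prime denotes the commutant in $\mathcal B(\mathcal H_\Lambda)$. *)

theory Defs
  imports Complex_Main
begin

text \<open>Edges of the N x N torus: (i,j,True) is the horizontal edge from vertex (i,j)
 to ((i+1) mod N, j); (i,j,False) is the vertical edge from (i,j) to (i,(j+1) mod N).
 The Hilbert space H_V = tensor over e in V of l^2(G) is l^2 of the set of
 configurations conf V (functions edges -> G vanishing off V); operators on it are
 complex matrices indexed by configurations, vanishing outside conf V x conf V.\<close>

type_synonym edge = "nat \<times> nat \<times> bool"
type_synonym 'g op = "(edge \<Rightarrow> 'g) \<Rightarrow> (edge \<Rightarrow> 'g) \<Rightarrow> complex"

definition conf :: "edge set \<Rightarrow> (edge \<Rightarrow> 'g::zero) set" where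
  "conf V = {\<sigma>. \<forall>e. e \<notin> V \<longrightarrow> \<sigma> e = 0}"

definition ops :: "edge set \<Rightarrow> ('g::zero) op set" where
  "ops V = {A. \<forall>x y. (x \<notin> conf V \<or> y \<notin> conf V) \<longrightarrow> A x y = 0}"

definition opmul :: "edge set \<Rightarrow> ('g::zero) op \<Rightarrow> 'g op \<Rightarrow> 'g op" where
  "opmul V A B = (\<lambda>x y. \<Sum>z\<in>conf V. A x z * B z y)"

definition adj :: "('g::zero) op \<Rightarrow> 'g op" where
  "adj A = (\<lambda>x y. cnj (A y x))"

definition idop :: "edge set \<Rightarrow> ('g::zero) op" where
  "idop V = (\<lambda>x y. if x = y \<and> x \<in> conf V then 1 else 0)"

definition restr :: "(edge \<Rightarrow> 'g::zero) \<Rightarrow> edge set \<Rightarrow> edge \<Rightarrow> 'g" where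
  "restr \<sigma> V = (\<lambda>e. if e \<in> V then \<sigma> e else 0)"

text \<open>Identification of B(H_V) with B(H_V) tensor 1 on Lambda \ V.\<close>
definition embed :: "edge set \<Rightarrow> edge set \<Rightarrow> ('g::zero) op \<Rightarrow> 'g op" where
  "embed L V a = (\<lambda>x y. if x \<in> conf L \<and> y \<in> conf L \<and> (\<forall>e\<in>L - V. x e = y e)
                        then a (restr x V) (restr y V) else 0)"

definition local_ops :: "edge set \<Rightarrow> edge set \<Rightarrow> ('g::zero) op set" where
  "local_ops L V = embed L V ` ops V"

definition commutant :: "edge set \<Rightarrow> ('g::zero) op set \<Rightarrow> 'g op set" where
  "commutant L M = {X \<in> ops L. \<forall>T\<in>M. opmul L X T = opmul L T X}"

definition torus_edges :: "nat \<Rightarrow> edge set" where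
  "torus_edges N = {(i,j,b). i < N \<and> j < N}"

definition torus_verts :: "nat \<Rightarrow> (nat \<times> nat) set" where
  "torus_verts N = {(i,j). i < N \<and> j < N}"

definition src :: "edge \<Rightarrow> nat \<times> nat" where
  "src e = (case e of (i,j,b) \<Rightarrow> (i,j))"

definition tgt :: "nat \<Rightarrow> edge \<Rightarrow> nat \<times> nat" where
  "tgt N e = (case e of (i,j,b) \<Rightarrow> if b then ((i+1) mod N, j) else (i, (j+1) mod N))"

definition star :: "nat \<Rightarrow> nat \<times> nat \<Rightarrow> edge set" where
  "star N v = {e \<in> torus_edges N. src e = v \<or> tgt N e = v}"

definition vshift :: "nat \<Rightarrow> nat \<times> nat \<Rightarrow> 'g::ab_group_add \<Rightarrow> (edge \<Rightarrow> 'g) \<Rightarrow> edge \<Rightarrow> 'g" where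
  "vshift N v g \<sigma> = (\<lambda>e. if e \<in> torus_edges N
      then \<sigma> e + (if src e = v then g else 0) - (if tgt N e = v then g else 0) else \<sigma> e)"

definition vertex_op :: "nat \<Rightarrow> edge set \<Rightarrow> nat \<times> nat \<Rightarrow> ('g::{ab_group_add,finite}) op" where
  "vertex_op N L v = (\<lambda>x y. if x \<in> conf L \<and> y \<in> conf L
      then (\<Sum>g\<in>(UNIV::'g set). if x = vshift N v g y then 1 else 0) / of_nat (card (UNIV::'g set)) else 0)"

definition plaq_edges :: "nat \<Rightarrow> nat \<times> nat \<Rightarrow> edge set" where
  "plaq_edges N p = (case p of (i,j) \<Rightarrow>
     {(i,j,True), ((i+1) mod N, j, False), (i, (j+1) mod N, True), (i,j,False)})"

definition flux :: "nat \<Rightarrow> nat \<times> nat \<Rightarrow> (edge \<Rightarrow> 'g::ab_group_add) \<Rightarrow> 'g" where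
  "flux N p \<sigma> = (case p of (i,j) \<Rightarrow>
     \<sigma> (i,j,True) + \<sigma> ((i+1) mod N, j, False) - \<sigma> (i, (j+1) mod N, True) - \<sigma> (i,j,False))"

definition plaq_op :: "nat \<Rightarrow> edge set \<Rightarrow> nat \<times> nat \<Rightarrow> ('g::ab_group_add) op" where
  "plaq_op N L p = (\<lambda>x y. if x = y \<and> x \<in> conf L \<and> flux N p x = 0 then 1 else 0)"

definition qd_ham :: "nat \<Rightarrow> edge set \<Rightarrow> ('g::{ab_group_add,finite}) op" where
  "qd_ham N L = (\<lambda>x y.
      - (\<Sum>v\<in>{v \<in> torus_verts N. star N v \<subseteq> L}. vertex_op N L v x y)
      - (\<Sum>p\<in>{p \<in> torus_verts N. plaq_edges N p \<subseteq> L}. plaq_op N L p x y))"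

definition spectral_decomp :: "edge set \<Rightarrow> ('g::zero) op \<Rightarrow> real set \<Rightarrow> (real \<Rightarrow> 'g op) \<Rightarrow> bool" where
  "spectral_decomp L H ev P \<longleftrightarrow> finite ev \<and>
     (\<forall>l\<in>ev. P l \<in> ops L \<and> adj (P l) = P l \<and> opmul L (P l) (P l) = P l \<and> P l \<noteq> (\<lambda>x y. 0)) \<and>
     (\<forall>l\<in>ev. \<forall>m\<in>ev. l \<noteq> m \<longrightarrow> opmul L (P l) (P m) = (\<lambda>x y. 0)) \<and>
     (\<lambda>x y. \<Sum>l\<in>ev. P l x y) = idop L \<and>
     H = (\<lambda>x y. \<Sum>l\<in>ev. complex_of_real l * P l x y)"

definition bohr :: "real set \<Rightarrow> real set" where
  "bohr ev = {l - l' | l l'. l \<in> ev \<and> l' \<in> ev}"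

definition freq :: "edge set \<Rightarrow> real set \<Rightarrow> (real \<Rightarrow> ('g::zero) op) \<Rightarrow> 'g op \<Rightarrow> real \<Rightarrow> 'g op" where
  "freq L ev P Q \<omega> = (\<lambda>x y. \<Sum>l\<in>ev. \<Sum>l'\<in>ev.
      if l - l' = \<omega> then opmul L (opmul L (P l) Q) (P l') x y else 0)"

definition dissip :: "edge set \<Rightarrow> real set \<Rightarrow> (real \<Rightarrow> ('g::zero) op) \<Rightarrow> 'i set
     \<Rightarrow> (edge \<Rightarrow> 'i \<Rightarrow> 'g op) \<Rightarrow> (edge \<Rightarrow> 'i \<Rightarrow> real \<Rightarrow> real) \<Rightarrow> edge \<Rightarrow> 'g op \<Rightarrow> 'g op" where
  "dissip L ev P I S h e X = (\<lambda>x y. \<Sum>i\<in>I. \<Sum>\<omega>\<in>bohr ev.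
      (let T = freq L ev P (embed L {e} (S e i)) \<omega> in
        complex_of_real (h e i \<omega>) *
         (opmul L (opmul L (adj T) X) T x y
          - (opmul L (opmul L (adj T) T) X x y + opmul L X (opmul L (adj T) T) x y) / 2)))"

definition lindblad :: "edge set \<Rightarrow> real set \<Rightarrow> (real \<Rightarrow> ('g::zero) op) \<Rightarrow> 'i set
     \<Rightarrow> (edge \<Rightarrow> 'i \<Rightarrow> 'g op) \<Rightarrow> (edge \<Rightarrow> 'i \<Rightarrow> real \<Rightarrow> real) \<Rightarrow> edge set \<Rightarrow> 'g op \<Rightarrow> 'g op" where
  "lindblad L ev P I S h R X = (\<lambda>x y. \<Sum>e\<in>R. dissip L ev P I S h e X x y)"

definition op_kernel :: "edge set \<Rightarrow> (('g::zero) op \<Rightarrow> 'g op) \<Rightarrow> 'g op set" where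
  "op_kernel L F = {X \<in> ops L. F X = (\<lambda>x y. 0)}"

end

theory Submission
  imports Defs "HOL-Library.Function_Algebras" "Jordan_Normal_Form.Char_Poly"
begin


section \<open>Finite-dimensional inner product toolkit\<close>

definition ipv :: "'a set \<Rightarrow> ('a \<Rightarrow> complex) \<Rightarrow> ('a \<Rightarrow> complex) \<Rightarrow> complex" where
  "ipv D u v = (\<Sum>x\<in>D. cnj (u x) * v x)"

definition vsupp :: "'a set \<Rightarrow> ('a \<Rightarrow> complex) set" where
  "vsupp D = {v. \<forall>x. x \<notin> D \<longrightarrow> v x = 0}"

definition lcomb :: "('a \<Rightarrow> complex) set \<Rightarrow> (('a \<Rightarrow> complex) \<Rightarrow> complex) \<Rightarrow> 'a \<Rightarrow> complex" where
  "lcomb B c = (\<lambda>x. \<Sum>b\<in>B. c b * b x)"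

definition orthonormal :: "'a set \<Rightarrow> ('a \<Rightarrow> complex) set \<Rightarrow> bool" where
  "orthonormal D B \<longleftrightarrow> finite B \<and> B \<subseteq> vsupp D \<and>
     (\<forall>b\<in>B. \<forall>b'\<in>B. ipv D b b' = (if b = b' then 1 else 0))"

definition subsp :: "'a set \<Rightarrow> ('a \<Rightarrow> complex) set \<Rightarrow> bool" where
  "subsp D M \<longleftrightarrow> M \<subseteq> vsupp D \<and> (\<lambda>x. 0) \<in> M \<and> (\<forall>u\<in>M. \<forall>v\<in>M. (\<lambda>x. u x + v x) \<in> M)
     \<and> (\<forall>c. \<forall>u\<in>M. (\<lambda>x. c * u x) \<in> M)"

lemma subsp_scale: "subsp D M \<Longrightarrow> u \<in> M \<Longrightarrow> (\<lambda>x. c * u x) \<in> M"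
  unfolding subsp_def by blast
lemma subsp_add: "subsp D M \<Longrightarrow> u \<in> M \<Longrightarrow> v \<in> M \<Longrightarrow> (\<lambda>x. u x + v x) \<in> M"
  unfolding subsp_def by blast
lemma subsp_diff: "subsp D M \<Longrightarrow> u \<in> M \<Longrightarrow> v \<in> M \<Longrightarrow> (\<lambda>x. u x - v x) \<in> M"
  using subsp_add[of D M u "\<lambda>x. (-1) * v x"] subsp_scale[of D M v "-1"] by simp
lemma subsp_zero: "subsp D M \<Longrightarrow> (\<lambda>x. 0) \<in> M"
  unfolding subsp_def by blast
lemma subsp_vsupp: "subsp D M \<Longrightarrow> u \<in> M \<Longrightarrow> u \<in> vsupp D"
  unfolding subsp_def by blast

lemma ipv_conj: "ipv D v u = cnj (ipv D u v)"
  unfolding ipv_def by (simp add: mult.commute)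

lemma ipv_lcomb_right: "finite B \<Longrightarrow> ipv D u (lcomb B c) = (\<Sum>b\<in>B. c b * ipv D u b)"
  unfolding ipv_def lcomb_def
  by (simp add: sum_distrib_left sum_distrib_right mult.assoc mult.left_commute sum.swap[of _ D])

lemma ipv_lcomb_left: "finite B \<Longrightarrow> ipv D (lcomb B c) u = (\<Sum>b\<in>B. cnj (c b) * ipv D b u)"
  by (subst ipv_conj, simp add: ipv_lcomb_right, subst ipv_conj, simp)

lemma ipv_add_right: "ipv D u (\<lambda>x. v x + w x) = ipv D u v + ipv D u w"
  unfolding ipv_def by (simp add: distrib_left sum.distrib)
lemma ipv_diff_right: "ipv D u (\<lambda>x. v x - w x) = ipv D u v - ipv D u w"
  unfolding ipv_def by (simp add: right_diff_distrib sum_subtractf)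
lemma ipv_scale_right: "ipv D u (\<lambda>x. c * v x) = c * ipv D u v"
  unfolding ipv_def by (simp add: sum_distrib_left mult.left_commute)
lemma ipv_add_left: "ipv D (\<lambda>x. v x + w x) u = ipv D v u + ipv D w u"
  unfolding ipv_def by (simp add: distrib_right sum.distrib)
lemma ipv_diff_left: "ipv D (\<lambda>x. v x - w x) u = ipv D v u - ipv D w u"
  unfolding ipv_def by (simp add: left_diff_distrib sum_subtractf)
lemma ipv_scale_left: "ipv D (\<lambda>x. c * v x) u = cnj c * ipv D v u"
  unfolding ipv_def by (simp add: sum_distrib_left mult.assoc)

lemma cnj_mult_self: "cnj z * z = complex_of_real ((cmod z)\<^sup>2)"
  by (simp add: complex_norm_square mult.commute del: of_real_power)

lemma ipv_self: "ipv D u u = complex_of_real (\<Sum>x\<in>D. (cmod (u x))\<^sup>2)"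
  unfolding ipv_def of_real_sum cnj_mult_self ..

lemma ipv_self_re: "Re (ipv D u u) = (\<Sum>x\<in>D. (cmod (u x))\<^sup>2)"
  by (simp only: ipv_self Re_complex_of_real)

lemma ipv_self_real: "Im (ipv D u u) = 0" "Re (ipv D u u) \<ge> 0"
  by (simp only: ipv_self Im_complex_of_real, simp only: ipv_self_re, simp add: sum_nonneg)

lemma ipv_self_of_real: "ipv D u u = complex_of_real (Re (ipv D u u))"
  using ipv_self_real(1)[of D u] complex_eq_iff by force

lemma ipv_self_zero:
  assumes "finite D" "u \<in> vsupp D" "ipv D u u = 0" shows "u = (\<lambda>x. 0)"
proof
  fix x
  have s: "(\<Sum>x\<in>D. (cmod (u x))\<^sup>2) = 0" using assms(3) ipv_self_re[of D u] by simp
  show "u x = 0"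
  proof (cases "x \<in> D")
    case True
    have "\<forall>x\<in>D. (cmod (u x))\<^sup>2 = 0" using sum_nonneg_eq_0_iff[of D "\<lambda>x. (cmod (u x))\<^sup>2"] s assms(1) by simp
    then have "(cmod (u x))\<^sup>2 = 0" using True by blast
    then show ?thesis by simp
  next
    case False then show ?thesis using assms(2) by (auto simp: vsupp_def)
  qed
qed

lemma lcomb_vsupp: "B \<subseteq> vsupp D \<Longrightarrow> lcomb B c \<in> vsupp D"
  unfolding lcomb_def vsupp_def by (auto intro!: sum.neutral)

lemma orthonormal_ip_lcomb:
  assumes "orthonormal D B" "b \<in> B"
  shows "ipv D b (lcomb B c) = c b"
proof -
  have f: "finite B" using assms unfolding orthonormal_def by auto
  have "ipv D b (lcomb B c) = (\<Sum>b'\<in>B. c b' * (if b = b' then 1 else 0))"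
    using assms by (simp add: ipv_lcomb_right[OF f] orthonormal_def)
  also have "\<dots> = (\<Sum>b'\<in>B. if b = b' then c b' else 0)" by (rule sum.cong) auto
  also have "\<dots> = c b" using assms(2) f by (simp add: sum.delta)
  finally show ?thesis .
qed

lemma bessel_eq:
  fixes v
  assumes on: "orthonormal D B"
  defines "r \<equiv> (\<lambda>x. v x - lcomb B (\<lambda>b. ipv D b v) x)"
  shows "ipv D r r = ipv D v v - complex_of_real (\<Sum>b\<in>B. (cmod (ipv D b v))\<^sup>2)"
    and "\<forall>b\<in>B. ipv D b r = 0"
proof -
  have f: "finite B" using on unfolding orthonormal_def by auto
  let ?p = "lcomb B (\<lambda>b. ipv D b v)"
  have pv: "ipv D ?p v = complex_of_real (\<Sum>b\<in>B. (cmod (ipv D b v))\<^sup>2)"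
    by (simp only: ipv_lcomb_left[OF f] of_real_sum cnj_mult_self)
  have vp: "ipv D v ?p = complex_of_real (\<Sum>b\<in>B. (cmod (ipv D b v))\<^sup>2)"
    by (subst ipv_conj, simp add: pv)
  have pp: "ipv D ?p ?p = complex_of_real (\<Sum>b\<in>B. (cmod (ipv D b v))\<^sup>2)"
  proof -
    have "ipv D ?p ?p = (\<Sum>b\<in>B. cnj (ipv D b v) * ipv D b ?p)"
      by (simp add: ipv_lcomb_left[OF f])
    also have "\<dots> = (\<Sum>b\<in>B. cnj (ipv D b v) * ipv D b v)"
      by (rule sum.cong, simp_all add: orthonormal_ip_lcomb[OF on])
    finally show ?thesis by (simp only: of_real_sum cnj_mult_self)
  qed
  show "ipv D r r = ipv D v v - complex_of_real (\<Sum>b\<in>B. (cmod (ipv D b v))\<^sup>2)"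
    unfolding r_def ipv_diff_left ipv_diff_right using pv vp pp by simp
  show "\<forall>b\<in>B. ipv D b r = 0"
    unfolding r_def ipv_diff_right using orthonormal_ip_lcomb[OF on] by simp
qed

lemma bessel:
  assumes "orthonormal D B"
  shows "(\<Sum>b\<in>B. (cmod (ipv D b v))\<^sup>2) \<le> Re (ipv D v v)"
proof -
  let ?r = "(\<lambda>x. v x - lcomb B (\<lambda>b. ipv D b v) x)"
  have "Re (ipv D ?r ?r) \<ge> 0" by (rule ipv_self_real)
  then show ?thesis using bessel_eq(1)[OF assms, of v] by simp
qed

definition delta_vec :: "'a \<Rightarrow> 'a \<Rightarrow> complex" where
  "delta_vec a = (\<lambda>x. if x = a then 1 else 0)"

lemma ipv_delta: "finite D \<Longrightarrow> a \<in> D \<Longrightarrow> ipv D u (delta_vec a) = cnj (u a)"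
  unfolding ipv_def delta_vec_def by (simp add: if_distrib sum.delta cong: if_cong)

lemma orthonormal_card:
  assumes on: "orthonormal D B" and D: "finite D"
  shows "card B \<le> card D"
proof -
  have f: "finite B" using on unfolding orthonormal_def by auto
  have "real (card B) = (\<Sum>b\<in>B. Re (ipv D b b))"
    using on unfolding orthonormal_def by simp
  also have "\<dots> = (\<Sum>b\<in>B. \<Sum>x\<in>D. (cmod (b x))\<^sup>2)" by (simp only: ipv_self_re)
  also have "\<dots> = (\<Sum>x\<in>D. \<Sum>b\<in>B. (cmod (ipv D b (delta_vec x)))\<^sup>2)"
    by (subst sum.swap, rule sum.cong, simp, rule sum.cong, simp_all add: ipv_delta[OF D])
  also have "\<dots> \<le> (\<Sum>x\<in>D. Re (ipv D (delta_vec x) (delta_vec x)))"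
    by (rule sum_mono, rule bessel[OF on])
  also have "\<dots> = (\<Sum>x\<in>D. 1)" by (rule sum.cong, simp, subst ipv_delta[OF D], assumption, simp add: delta_vec_def)
  finally show ?thesis by simp
qed



lemma inv_sqrt_sq: fixes n :: real assumes "n > 0" shows "(1 / sqrt n) * (1 / sqrt n) * n = 1"
proof -
  have s: "sqrt n * sqrt n = n" using assms by simp
  have "sqrt n \<noteq> 0" using assms by simp
  then show ?thesis by (metis s divide_self_if times_divide_times_eq mult_1 nonzero_divide_eq_eq)
qed

lemma orthonormal_extend:
  assumes on: "orthonormal D B" and D: "finite D" and r: "r \<in> vsupp D" "r \<noteq> (\<lambda>x. 0)"
    and orth: "\<forall>b\<in>B. ipv D b r = 0"
  defines "r' \<equiv> (\<lambda>x. complex_of_real (1 / sqrt (Re (ipv D r r))) * r x)"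
  shows "orthonormal D (insert r' B)" "r' \<notin> B" "card (insert r' B) = Suc (card B)"
proof -
  define n where "n = Re (ipv D r r)"
  have n0: "n > 0"
  proof -
    have "n \<ge> 0" unfolding n_def by (rule ipv_self_real)
    moreover have "ipv D r r \<noteq> 0" using ipv_self_zero[OF D r(1)] r(2) by auto
    then have "n \<noteq> 0" unfolding n_def using ipv_self_real(1)[of D r] complex_eq_iff by force
    ultimately show ?thesis by simp
  qed
  have nr: "ipv D r r = complex_of_real n" unfolding n_def by (rule ipv_self_of_real)
  have "ipv D r' r' = cnj (complex_of_real (1 / sqrt n)) * (complex_of_real (1 / sqrt n) * ipv D r r)"
    unfolding r'_def n_def by (simp only: ipv_scale_left ipv_scale_right)
  also have "\<dots> = complex_of_real ((1 / sqrt n) * (1 / sqrt n) * n)"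
    by (subst nr) (simp only: complex_cnj_complex_of_real of_real_mult[symmetric] mult.assoc)
  finally have "ipv D r' r' = complex_of_real ((1 / sqrt n) * (1 / sqrt n) * n)" .
  moreover have "(1 / sqrt n) * (1 / sqrt n) * n = 1" by (rule inv_sqrt_sq[OF n0])
  ultimately have rr': "ipv D r' r' = 1" by (simp only: of_real_1)
  have or': "\<forall>b\<in>B. ipv D b r' = 0" unfolding r'_def ipv_scale_right using orth by simp
  have r'B: "r' \<notin> B"
  proof
    assume "r' \<in> B" then have "ipv D r' r' = 0" using or' by auto
    then show False using rr' by simp
  qed
  have r'v: "r' \<in> vsupp D" using r(1) unfolding r'_def vsupp_def by auto
  show "orthonormal D (insert r' B)"
    unfolding orthonormal_def
  proof (intro conjI ballI)
    show "finite (insert r' B)" using on unfolding orthonormal_def by simp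
    show "insert r' B \<subseteq> vsupp D" using on r'v unfolding orthonormal_def by simp
    fix b b' assume b: "b \<in> insert r' B" and b': "b' \<in> insert r' B"
    show "ipv D b b' = (if b = b' then 1 else 0)"
    proof (cases "b = r'")
      case True
      show ?thesis
      proof (cases "b' = r'")
        case True then show ?thesis using \<open>b = r'\<close> rr' by simp
      next
        case False
        then have "b' \<in> B" using b' by simp
        then have "ipv D r' b' = 0" using or' by (subst ipv_conj, simp)
        then show ?thesis using \<open>b = r'\<close> False by simp
      qed
    next
      case False
      then have bB: "b \<in> B" using b by simp
      show ?thesis
      proof (cases "b' = r'")
        case True then show ?thesis using bB or' r'B by auto
      next
        case False then have "b' \<in> B" using b' by simp
        then show ?thesis using bB on unfolding orthonormal_def by simp
      qed
    qed
  qed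
  show "r' \<notin> B" by (rule r'B)
  show "card (insert r' B) = Suc (card B)" using r'B on unfolding orthonormal_def by simp
qed

lemma onb_exists:
  assumes D: "finite D" and M: "subsp D M"
  shows "\<exists>B. orthonormal D B \<and> B \<subseteq> M \<and> (\<forall>m\<in>M. m = lcomb B (\<lambda>b. ipv D b m))"
proof (rule ccontr)
  assume nex: "\<not> ?thesis"
  have "\<exists>B. orthonormal D B \<and> B \<subseteq> M \<and> card B = k" for k
  proof (induction k)
    case 0
    then show ?case by (intro exI[of _ "{}"], simp add: orthonormal_def)
  next
    case (Suc k)
    then obtain B where on: "orthonormal D B" and OM: "B \<subseteq> M" and c: "card B = k" by blast
    have f: "finite B" using on unfolding orthonormal_def by auto
    from nex on OM obtain m where m: "m \<in> M" and mne: "m \<noteq> lcomb B (\<lambda>b. ipv D b m)" by blast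
    define r where "r = (\<lambda>x. m x - lcomb B (\<lambda>b. ipv D b m) x)"
    have lM: "lcomb B c \<in> M" for c
      using f OM
    proof (induction B rule: finite_induct)
      case empty then show ?case using subsp_zero[OF M] by (simp add: lcomb_def)
    next
      case (insert a F)
      have "lcomb (insert a F) c = (\<lambda>x. c a * a x + lcomb F c x)"
        using insert by (simp add: lcomb_def)
      moreover have "(\<lambda>x. c a * a x) \<in> M" using insert by (intro subsp_scale[OF M]) auto
      ultimately show ?case using insert by (simp add: subsp_add[OF M])
    qed
    have rM: "r \<in> M"
      unfolding r_def by (rule subsp_diff[OF M m lM])
    have rv: "r \<in> vsupp D" by (rule subsp_vsupp[OF M rM])
    have rne: "r \<noteq> (\<lambda>x. 0)"
    proof
      assume r0: "r = (\<lambda>x. 0)"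
      have "m x = lcomb B (\<lambda>b. ipv D b m) x" for x
        using fun_cong[OF r0, of x] unfolding r_def by simp
      then have "m = lcomb B (\<lambda>b. ipv D b m)" by (rule ext)
      then show False using mne by simp
    qed
    have orth: "\<forall>b\<in>B. ipv D b r = 0" using bessel_eq(2)[OF on] unfolding r_def by blast
    define r' where "r' = (\<lambda>x. complex_of_real (1 / sqrt (Re (ipv D r r))) * r x)"
    note E = orthonormal_extend[OF on D rv rne orth, folded r'_def]
    have "r' \<in> M" unfolding r'_def by (rule subsp_scale[OF M rM])
    have "insert r' B \<subseteq> M" using OM \<open>r' \<in> M\<close> by simp
    moreover have "card (insert r' B) = Suc k" using E(3) c by simp
    ultimately show ?case using E(1) by blast
  qed
  then obtain B where "orthonormal D B" "card B = Suc (card D)" by blast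
  then show False using orthonormal_card[OF _ D, of B] by simp
qed




definition appl :: "'a set \<Rightarrow> ('a \<Rightarrow> 'a \<Rightarrow> complex) \<Rightarrow> ('a \<Rightarrow> complex) \<Rightarrow> 'a \<Rightarrow> complex" where
  "appl D Y v = (\<lambda>x. \<Sum>y\<in>D. Y x y * v y)"

definition herm :: "'a set \<Rightarrow> ('a \<Rightarrow> 'a \<Rightarrow> complex) \<Rightarrow> bool" where
  "herm D Y \<longleftrightarrow> (\<forall>x\<in>D. \<forall>y\<in>D. Y x y = cnj (Y y x))"

definition rsupp :: "'a set \<Rightarrow> ('a \<Rightarrow> 'a \<Rightarrow> complex) \<Rightarrow> bool" where
  "rsupp D Y \<longleftrightarrow> (\<forall>x y. x \<notin> D \<longrightarrow> Y x y = 0)"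

lemma appl_vsupp: "rsupp D Y \<Longrightarrow> appl D Y v \<in> vsupp D"
  unfolding rsupp_def vsupp_def appl_def by simp

lemma appl_sum: "finite K \<Longrightarrow> appl D Y (\<lambda>x. \<Sum>k\<in>K. c k * g k x) = (\<lambda>x. \<Sum>k\<in>K. c k * appl D Y (g k) x)"
  unfolding appl_def by (rule ext) (simp add: sum_distrib_left sum.swap[of _ D] mult.left_commute)

lemma subsp_sum:
  assumes "finite K" "subsp D M" "\<forall>k\<in>K. g k \<in> M"
  shows "(\<lambda>x. \<Sum>k\<in>K. g k x) \<in> M"
  using assms(1,3)
proof (induction K rule: finite_induct)
  case empty then show ?case using subsp_zero[OF assms(2)] by simp
next
  case (insert a F)
  then show ?case using subsp_add[OF assms(2), of "g a" "\<lambda>x. \<Sum>k\<in>F. g k x"] by simp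
qed

lemma herm_ipv:
  assumes "herm D Y" shows "ipv D u (appl D Y v) = ipv D (appl D Y u) v"
proof -
  have "ipv D u (appl D Y v) = (\<Sum>x\<in>D. \<Sum>y\<in>D. cnj (u x) * Y x y * v y)"
    unfolding ipv_def appl_def by (simp add: sum_distrib_left mult.assoc)
  also have "\<dots> = (\<Sum>y\<in>D. \<Sum>x\<in>D. cnj (Y y x * u x) * v y)"
  proof (subst sum.swap, rule sum.cong, simp, rule sum.cong, simp)
    fix x y assume "y \<in> D" "x \<in> D"
    then have h: "Y x y = cnj (Y y x)" using assms unfolding herm_def by blast
    show "cnj (u x) * Y x y * v y = cnj (Y y x * u x) * v y" by (simp only: h complex_cnj_mult mult.commute mult.left_commute)
  qed
  also have "\<dots> = ipv D (appl D Y u) v"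
    unfolding ipv_def appl_def by (simp add: sum_distrib_right)
  finally show ?thesis .
qed

lemma eig_exists:
  assumes D: "finite D" and Y: "rsupp D Y" "herm D Y" and W: "subsp D W"
    and inv: "\<forall>w\<in>W. appl D Y w \<in> W" and w: "w \<in> W" "w \<noteq> (\<lambda>x. 0)"
  shows "\<exists>u\<in>W. u \<noteq> (\<lambda>x. 0) \<and> (\<exists>\<mu>::real. appl D Y u = (\<lambda>x. complex_of_real \<mu> * u x))"
proof -
  obtain Bw where onb: "orthonormal D Bw" and BW: "Bw \<subseteq> W"
    and cpl: "\<forall>m\<in>W. m = lcomb Bw (\<lambda>b. ipv D b m)"
    using onb_exists[OF D W] by blast
  have fB: "finite Bw" using onb unfolding orthonormal_def by auto
  have "Bw \<noteq> {}"
  proof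
    assume "Bw = {}"
    then have "w = (\<lambda>x. 0)" using cpl w(1) by (auto simp: lcomb_def)
    then show False using w(2) by simp
  qed
  define m where "m = card Bw"
  have m0: "m > 0" using fB \<open>Bw \<noteq> {}\<close> unfolding m_def by (simp add: card_gt_0_iff)
  obtain f where bij: "bij_betw f {0..<m} Bw" using ex_bij_betw_nat_finite[OF fB] unfolding m_def by blast
  have fW: "f i \<in> W" if "i < m" for i using bij BW that by (auto simp: bij_betw_def)
  have fB': "f i \<in> Bw" if "i < m" for i using bij that by (auto simp: bij_betw_def)
  have finj: "f i = f j \<longleftrightarrow> i = j" if "i < m" "j < m" for i j
    using bij that unfolding bij_betw_def inj_on_def by auto
  define A where "A = mat m m (\<lambda>(i,j). ipv D (f i) (appl D Y (f j)))"
  have Ac: "A \<in> carrier_mat m m" unfolding A_def by simp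
  obtain as where cp: "char_poly A = (\<Prod>a\<leftarrow>as. [:- a, 1:])" and las: "length as = m"
    using char_poly_factorized[OF Ac] by blast
  obtain a as' where asa: "as = a # as'" using las m0 by (cases as) auto
  have "poly (char_poly A) a = 0" unfolding cp asa by simp
  then have "eigenvalue A a" using eigenvalue_root_char_poly[OF Ac] by simp
  then obtain c where "eigenvector A c a" unfolding eigenvalue_def by blast
  then have cc: "c \<in> carrier_vec m" and c0: "c \<noteq> 0\<^sub>v m" and Ac_eq: "A *\<^sub>v c = a \<cdot>\<^sub>v c"
    unfolding eigenvector_def using Ac by auto
  have Aent: "(\<Sum>j\<in>{0..<m}. A $$ (i,j) * c $ j) = a * c $ i" if "i < m" for i
  proof -
    have "(A *\<^sub>v c) $ i = a * c $ i" using Ac_eq that cc by simp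
    moreover have "(A *\<^sub>v c) $ i = (\<Sum>j\<in>{0..<m}. A $$ (i,j) * c $ j)"
      using that Ac cc by (simp add: scalar_prod_def)
    ultimately show ?thesis by simp
  qed
  define u where "u = (\<lambda>x. \<Sum>j\<in>{0..<m}. c $ j * f j x)"
  have uW: "u \<in> W" unfolding u_def
    by (rule subsp_sum[OF _ W], simp, auto intro!: subsp_scale[OF W] fW)
  have ipu: "ipv D (f i) u = c $ i" if "i < m" for i
  proof -
    have "ipv D (f i) u = (\<Sum>j\<in>{0..<m}. c $ j * ipv D (f i) (f j))"
      unfolding u_def ipv_def by (simp add: sum_distrib_left sum.swap[of _ D] mult.left_commute)
    also have "\<dots> = (\<Sum>j\<in>{0..<m}. if j = i then c $ j else 0)"
      by (rule sum.cong, simp) (use onb fB' finj that in \<open>auto simp: orthonormal_def\<close>)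
    also have "\<dots> = c $ i" using that by simp
    finally show ?thesis .
  qed
  have u0: "u \<noteq> (\<lambda>x. 0)"
  proof
    assume "u = (\<lambda>x. 0)"
    then have "c $ i = 0" if "i < m" for i using ipu[OF that] by (simp add: ipv_def)
    then have "c = 0\<^sub>v m" using cc by (intro eq_vecI) auto
    then show False using c0 by simp
  qed
  have Yf: "appl D Y (f j) = (\<lambda>x. \<Sum>i\<in>{0..<m}. A $$ (i,j) * f i x)" if "j < m" for j
  proof -
    have "appl D Y (f j) = lcomb Bw (\<lambda>b. ipv D b (appl D Y (f j)))"
      using cpl inv fW[OF that] by blast
    also have "\<dots> = (\<lambda>x. \<Sum>i\<in>{0..<m}. ipv D (f i) (appl D Y (f j)) * f i x)"
      unfolding lcomb_def by (rule ext, rule sum.reindex_bij_betw[OF bij, symmetric])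
    also have "\<dots> = (\<lambda>x. \<Sum>i\<in>{0..<m}. A $$ (i,j) * f i x)"
      unfolding A_def using that by (intro ext sum.cong) auto
    finally show ?thesis .
  qed
  have Yu: "appl D Y u = (\<lambda>x. a * u x)"
  proof (rule ext)
    fix x
    have "appl D Y u x = (\<Sum>j\<in>{0..<m}. c $ j * appl D Y (f j) x)"
      unfolding u_def by (simp add: appl_sum)
    also have "\<dots> = (\<Sum>j\<in>{0..<m}. c $ j * (\<Sum>i\<in>{0..<m}. A $$ (i,j) * f i x))"
      by (rule sum.cong, simp, simp add: Yf)
    also have "\<dots> = (\<Sum>i\<in>{0..<m}. (\<Sum>j\<in>{0..<m}. A $$ (i,j) * c $ j) * f i x)"
      by (simp only: sum_distrib_left sum_distrib_right, subst sum.swap, rule sum.cong, simp,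
          rule sum.cong, simp, simp only: mult.commute mult.left_commute)
    also have "\<dots> = (\<Sum>i\<in>{0..<m}. a * c $ i * f i x)"
      by (rule sum.cong, simp, simp add: Aent)
    also have "\<dots> = a * u x" unfolding u_def by (simp add: sum_distrib_left mult.assoc)
    finally show "appl D Y u x = a * u x" .
  qed
  have uu: "ipv D u u \<noteq> 0" using ipv_self_zero[OF D subsp_vsupp[OF W uW]] u0 by auto
  have "a * ipv D u u = cnj a * ipv D u u"
  proof -
    have e1: "ipv D u (appl D Y u) = a * ipv D u u" unfolding Yu by (simp add: ipv_scale_right)
    have e2: "ipv D (appl D Y u) u = cnj a * ipv D u u" unfolding Yu by (simp add: ipv_scale_left)
    have e3: "ipv D u (appl D Y u) = ipv D (appl D Y u) u" by (rule herm_ipv[OF Y(2)])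
    have "a * ipv D u u = ipv D u (appl D Y u)" using e1 by simp
    also have "\<dots> = cnj a * ipv D u u" using e3 e2 by simp
    finally show ?thesis .
  qed
  then have "a = cnj a" using uu by simp
  then have "Im a = Im (cnj a)" by simp
  then have "Im a = 0" by simp
  then have "a = complex_of_real (Re a)" by (simp add: complex_eq_iff)
  then have "appl D Y u = (\<lambda>x. complex_of_real (Re a) * u x)" using Yu by simp
  then show ?thesis using uW u0 by blast
qed

lemma appl_scale: "appl D Y (\<lambda>x. c * u x) = (\<lambda>x. c * appl D Y u x)"
  unfolding appl_def by (rule ext) (simp add: sum_distrib_left mult.left_commute)

lemma appl_lcomb: "finite B \<Longrightarrow> appl D Y (lcomb B c) = (\<lambda>x. \<Sum>b\<in>B. c b * appl D Y b x)"
  unfolding lcomb_def by (rule appl_sum)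

definition eigset :: "'a set \<Rightarrow> ('a \<Rightarrow> 'a \<Rightarrow> complex) \<Rightarrow> ('a \<Rightarrow> complex) set \<Rightarrow> bool" where
  "eigset D Y B \<longleftrightarrow> orthonormal D B \<and> (\<forall>b\<in>B. \<exists>\<mu>::real. appl D Y b = (\<lambda>x. complex_of_real \<mu> * b x))"

lemma herm_eigenbasis:
  assumes D: "finite D" and Y: "rsupp D Y" "herm D Y"
  shows "\<exists>B \<mu>. orthonormal D B \<and> (\<forall>v\<in>vsupp D. v = lcomb B (\<lambda>b. ipv D b v))
          \<and> (\<forall>b\<in>B. appl D Y b = (\<lambda>x. complex_of_real (\<mu> b) * b x))"
proof -
  have "\<exists>B. eigset D Y B \<and> (\<forall>v\<in>vsupp D. v = lcomb B (\<lambda>b. ipv D b v))"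
  proof (rule ccontr)
    assume nex: "\<not> ?thesis"
    have "\<exists>B. eigset D Y B \<and> card B = k" for k
    proof (induction k)
      case 0 then show ?case by (intro exI[of _ "{}"], simp add: eigset_def orthonormal_def)
    next
      case (Suc k)
      then obtain B where eB: "eigset D Y B" and c: "card B = k" by blast
      have on: "orthonormal D B" using eB unfolding eigset_def by simp
      have fB: "finite B" using on unfolding orthonormal_def by simp
      from nex eB obtain v where v: "v \<in> vsupp D" and vne: "v \<noteq> lcomb B (\<lambda>b. ipv D b v)" by blast
      define W where "W = {w \<in> vsupp D. \<forall>b\<in>B. ipv D b w = 0}"
      have W: "subsp D W" unfolding subsp_def W_def
        by (auto simp: vsupp_def ipv_add_right ipv_scale_right, simp add: ipv_def)
      have inv: "\<forall>w\<in>W. appl D Y w \<in> W"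
      proof
        fix w assume w: "w \<in> W"
        have "ipv D b (appl D Y w) = 0" if b: "b \<in> B" for b
        proof -
          obtain \<mu> where mu: "appl D Y b = (\<lambda>x. complex_of_real \<mu> * b x)"
            using eB b unfolding eigset_def by blast
          have "ipv D b (appl D Y w) = ipv D (appl D Y b) w" by (rule herm_ipv[OF Y(2)])
          also have "\<dots> = complex_of_real \<mu> * ipv D b w" unfolding mu ipv_scale_left by simp
          also have "\<dots> = 0" using w b unfolding W_def by simp
          finally show ?thesis .
        qed
        then show "appl D Y w \<in> W" unfolding W_def using appl_vsupp[OF Y(1)] by simp
      qed
      define r where "r = (\<lambda>x. v x - lcomb B (\<lambda>b. ipv D b v) x)"
      have rW: "r \<in> W"
      proof -
        have "r \<in> vsupp D" unfolding r_def using v lcomb_vsupp[of B D] on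
          unfolding orthonormal_def vsupp_def by auto
        then show ?thesis using bessel_eq(2)[OF on, of v] unfolding W_def r_def by simp
      qed
      have r0: "r \<noteq> (\<lambda>x. 0)"
      proof
        assume r0: "r = (\<lambda>x. 0)"
        have "v x = lcomb B (\<lambda>b. ipv D b v) x" for x
          using fun_cong[OF r0, of x] unfolding r_def by simp
        then have "v = lcomb B (\<lambda>b. ipv D b v)" by (rule ext)
        then show False using vne by simp
      qed
      obtain u \<mu> where uW: "u \<in> W" and u0: "u \<noteq> (\<lambda>x. 0)"
        and Yu: "appl D Y u = (\<lambda>x. complex_of_real \<mu> * u x)"
        using eig_exists[OF D Y W inv rW r0] by blast
      have uv: "u \<in> vsupp D" and uo: "\<forall>b\<in>B. ipv D b u = 0" using uW unfolding W_def by auto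
      define u' where "u' = (\<lambda>x. complex_of_real (1 / sqrt (Re (ipv D u u))) * u x)"
      note E = orthonormal_extend[OF on D uv u0 uo, folded u'_def]
      have Yu': "appl D Y u' = (\<lambda>x. complex_of_real \<mu> * u' x)"
        unfolding u'_def appl_scale Yu by (simp add: mult.left_commute)
      have "eigset D Y (insert u' B)" using E(1) eB Yu' unfolding eigset_def by blast
      moreover have "card (insert u' B) = Suc k" using E(3) c by simp
      ultimately show ?case by blast
    qed
    then obtain B where "eigset D Y B" "card B = Suc (card D)" by blast
    then show False using orthonormal_card[OF _ D, of B] unfolding eigset_def by simp
  qed
  then obtain B where eB: "eigset D Y B" and cpl: "\<forall>v\<in>vsupp D. v = lcomb B (\<lambda>b. ipv D b v)" by blast
  define \<mu> where "\<mu> b = (SOME \<mu>::real. appl D Y b = (\<lambda>x. complex_of_real \<mu> * b x))" for b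
  have "\<forall>b\<in>B. appl D Y b = (\<lambda>x. complex_of_real (\<mu> b) * b x)"
  proof
    fix b assume "b \<in> B"
    then have "\<exists>\<mu>::real. appl D Y b = (\<lambda>x. complex_of_real \<mu> * b x)" using eB unfolding eigset_def by blast
    then show "appl D Y b = (\<lambda>x. complex_of_real (\<mu> b) * b x)" unfolding \<mu>_def by (rule someI_ex)
  qed
  then show ?thesis using eB cpl unfolding eigset_def by blast
qed

definition gmul :: "'a set \<Rightarrow> ('a \<Rightarrow> 'a \<Rightarrow> complex) \<Rightarrow> ('a \<Rightarrow> 'a \<Rightarrow> complex) \<Rightarrow> 'a \<Rightarrow> 'a \<Rightarrow> complex" where
  "gmul D A B = (\<lambda>x y. \<Sum>z\<in>D. A x z * B z y)"

definition gadj :: "('a \<Rightarrow> 'a \<Rightarrow> complex) \<Rightarrow> 'a \<Rightarrow> 'a \<Rightarrow> complex" where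
  "gadj A = (\<lambda>x y. cnj (A y x))"

definition mel :: "'a set \<Rightarrow> ('a \<Rightarrow> 'a \<Rightarrow> complex) \<Rightarrow> ('a \<Rightarrow> complex) \<Rightarrow> ('a \<Rightarrow> complex) \<Rightarrow> complex" where
  "mel D A u v = ipv D u (appl D A v)"

lemma appl_gmul: "appl D (gmul D A B) v = appl D A (appl D B v)"
  unfolding appl_def gmul_def
  by (rule ext, simp only: sum_distrib_left sum_distrib_right mult.assoc, rule sum.swap)

lemma ipv_sum_right: "ipv D u (\<lambda>x. \<Sum>k\<in>K. c k * g k x) = (\<Sum>k\<in>K. c k * ipv D u (g k))"
  unfolding ipv_def
  by (simp only: sum_distrib_left, subst sum.swap, simp only: mult.left_commute)

lemma mel_gmul:
  assumes on: "orthonormal D B" and cpl: "\<forall>v\<in>vsupp D. v = lcomb B (\<lambda>b. ipv D b v)"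
    and Bm: "rsupp D Bm"
  shows "mel D (gmul D A Bm) u v = (\<Sum>b\<in>B. mel D A u b * mel D Bm b v)"
proof -
  have fB: "finite B" using on unfolding orthonormal_def by simp
  have "appl D Bm v = lcomb B (\<lambda>b. ipv D b (appl D Bm v))" using cpl appl_vsupp[OF Bm] by blast
  then have "mel D (gmul D A Bm) u v = ipv D u (appl D A (lcomb B (\<lambda>b. ipv D b (appl D Bm v))))"
    unfolding mel_def appl_gmul by simp
  also have "\<dots> = (\<Sum>b\<in>B. ipv D b (appl D Bm v) * ipv D u (appl D A b))"
    unfolding appl_lcomb[OF fB] ipv_sum_right ..
  finally show ?thesis unfolding mel_def by (simp add: mult.commute)
qed

lemma mel_gadj: "mel D (gadj A) u v = cnj (mel D A v u)"
  unfolding mel_def ipv_def appl_def gadj_def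
  by (simp only: sum_distrib_left cnj_sum complex_cnj_mult complex_cnj_cnj, subst sum.swap,
      simp only: mult.commute mult.left_commute)

lemma mel_zero:
  assumes on: "orthonormal D B" and cpl: "\<forall>v\<in>vsupp D. v = lcomb B (\<lambda>b. ipv D b v)"
    and A: "rsupp D A" "\<forall>x y. y \<notin> D \<longrightarrow> A x y = 0" and z: "\<forall>b\<in>B. \<forall>b'\<in>B. mel D A b b' = 0"
    and D: "finite D"
  shows "A = (\<lambda>x y. 0)"
proof (intro ext)
  fix x y
  have fB: "finite B" using on unfolding orthonormal_def by simp
  have Ab: "appl D A b' = (\<lambda>x. 0)" if "b' \<in> B" for b'
  proof -
    have "appl D A b' = lcomb B (\<lambda>b. ipv D b (appl D A b'))" using cpl appl_vsupp[OF A(1)] by blast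
    also have "\<dots> = (\<lambda>x. 0)" using z that unfolding mel_def lcomb_def by simp
    finally show ?thesis .
  qed
  show "A x y = 0"
  proof (cases "x \<in> D \<and> y \<in> D")
    case True
    have dv: "delta_vec y \<in> vsupp D" using True unfolding vsupp_def delta_vec_def by auto
    have "appl D A (delta_vec y) = appl D A (lcomb B (\<lambda>b. ipv D b (delta_vec y)))" using cpl dv by metis
    also have "\<dots> = (\<lambda>x. 0)" unfolding appl_lcomb[OF fB] using Ab by simp
    finally have "appl D A (delta_vec y) x = 0" by simp
    moreover have "appl D A (delta_vec y) x = A x y" unfolding appl_def delta_vec_def using True D
      by (simp add: if_distrib sum.delta cong: if_cong)
    ultimately show ?thesis by simp
  next
    case False then show ?thesis using A unfolding rsupp_def by auto
  qed
qed




lemma diag_lemma: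
  fixes \<mu> :: "'b \<Rightarrow> real" and t :: "'k \<Rightarrow> 'b \<Rightarrow> 'b \<Rightarrow> complex" and c :: "'k \<Rightarrow> real"
  assumes B: "finite B" and K: "finite K" and cpos: "\<forall>k\<in>K. c k > 0"
    and adjc: "\<forall>k\<in>K. \<exists>k'\<in>K. \<forall>a\<in>B. \<forall>b\<in>B. t k' a b = cnj (t k b a)"
    and eq: "\<forall>b\<in>B. (\<Sum>k\<in>K. c k * (\<Sum>a\<in>B. (\<mu> a - \<mu> b) * (cmod (t k a b))\<^sup>2)) = 0"
  shows "\<forall>k\<in>K. \<forall>a\<in>B. \<forall>b\<in>B. \<mu> a \<noteq> \<mu> b \<longrightarrow> t k a b = 0"
proof -
  define cnt where "cnt b = card {a\<in>B. \<mu> b < \<mu> a}" for b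
  have main: "\<forall>b\<in>B. cnt b = n \<longrightarrow> (\<forall>k\<in>K. \<forall>a\<in>B. \<mu> a \<noteq> \<mu> b \<longrightarrow> t k a b = 0)" for n
  proof (induction n rule: less_induct)
    case (less n)
    show ?case
    proof (intro ballI impI)
      fix b k a assume b: "b \<in> B" and cb: "cnt b = n" and k: "k \<in> K" and a: "a \<in> B" and ne: "\<mu> a \<noteq> \<mu> b"
      have up: "t k' a' b = 0" if k': "k' \<in> K" and a': "a' \<in> B" and gt: "\<mu> a' > \<mu> b" for k' a'
      proof -
        have "cnt a' < cnt b" unfolding cnt_def
          by (rule psubset_card_mono) (use B gt a' in auto)
        then have Qa: "\<forall>k\<in>K. \<forall>a\<in>B. \<mu> a \<noteq> \<mu> a' \<longrightarrow> t k a a' = 0" using less.IH cb a' by blast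
        obtain k'' where k'': "k'' \<in> K" and tk: "\<forall>x\<in>B. \<forall>y\<in>B. t k'' x y = cnj (t k' y x)"
          using adjc k' by blast
        have "t k'' b a' = 0" using Qa k'' b gt by auto
        then have "cnj (t k' a' b) = 0" using tk b a' by simp
        then show ?thesis by simp
      qed
      define s where "s k' a' = c k' * ((\<mu> a' - \<mu> b) * (cmod (t k' a' b))\<^sup>2)" for k' a'
      have snp: "s k' a' \<le> 0" if "k' \<in> K" "a' \<in> B" for k' a'
      proof (cases "\<mu> a' > \<mu> b")
        case True then show ?thesis using up[OF that True] unfolding s_def by simp
      next
        case False
        then have "(\<mu> a' - \<mu> b) * (cmod (t k' a' b))\<^sup>2 \<le> 0" by (simp add: mult_nonpos_nonneg)
        moreover have "c k' \<ge> 0" using cpos that by auto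
        ultimately show ?thesis unfolding s_def by (rule mult_nonneg_nonpos[rotated])
      qed
      have "(\<Sum>k'\<in>K. \<Sum>a'\<in>B. s k' a') = 0" using eq b unfolding s_def by (simp add: sum_distrib_left)
      then have "(\<Sum>k'\<in>K. \<Sum>a'\<in>B. - s k' a') = 0" by (simp add: sum_negf)
      then have "\<forall>k'\<in>K. (\<Sum>a'\<in>B. - s k' a') = 0"
        using sum_nonneg_eq_0_iff[OF K, of "\<lambda>k'. \<Sum>a'\<in>B. - s k' a'"] snp
        by (simp add: sum_nonneg)
      then have "(\<Sum>a'\<in>B. - s k a') = 0" using k by blast
      then have "\<forall>a'\<in>B. - s k a' = 0"
        using sum_nonneg_eq_0_iff[OF B, of "\<lambda>a'. - s k a'"] snp k by simp
      then have sk: "s k a = 0" using a by simp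
      show "t k a b = 0"
      proof (cases "\<mu> a > \<mu> b")
        case True then show ?thesis using up k a by simp
      next
        case False
        then have "\<mu> a - \<mu> b \<noteq> 0" using ne by simp
        moreover have "c k \<noteq> 0" using cpos k by auto
        ultimately have "(cmod (t k a b))\<^sup>2 = 0" using sk unfolding s_def by simp
        then show ?thesis by simp
      qed
    qed
  qed
  show ?thesis using main by blast
qed


definition gops :: "'a set \<Rightarrow> ('a \<Rightarrow> 'a \<Rightarrow> complex) \<Rightarrow> bool" where
  "gops D A \<longleftrightarrow> (\<forall>x y. (x \<notin> D \<or> y \<notin> D) \<longrightarrow> A x y = 0)"

definition gLind :: "'a set \<Rightarrow> 'k set \<Rightarrow> ('k \<Rightarrow> 'a \<Rightarrow> 'a \<Rightarrow> complex) \<Rightarrow> ('k \<Rightarrow> real)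
    \<Rightarrow> ('a \<Rightarrow> 'a \<Rightarrow> complex) \<Rightarrow> 'a \<Rightarrow> 'a \<Rightarrow> complex" where
  "gLind D K T c X = (\<lambda>x y. \<Sum>k\<in>K. complex_of_real (c k) *
      (gmul D (gmul D (gadj (T k)) X) (T k) x y
       - (gmul D (gmul D (gadj (T k)) (T k)) X x y + gmul D X (gmul D (gadj (T k)) (T k)) x y) / 2))"

lemma gops_rsupp: "gops D A \<Longrightarrow> rsupp D A"
  unfolding gops_def rsupp_def by blast
lemma gops_csupp: "gops D A \<Longrightarrow> \<forall>x y. y \<notin> D \<longrightarrow> A x y = 0"
  unfolding gops_def by blast
lemma gops_gmul: "gops D A \<Longrightarrow> gops D B \<Longrightarrow> gops D (gmul D A B)"
  unfolding gops_def gmul_def by auto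
lemma rsupp_gmul: "rsupp D A \<Longrightarrow> rsupp D (gmul D A B)"
  unfolding rsupp_def gmul_def by auto
lemma gops_gadj: "gops D A \<Longrightarrow> gops D (gadj A)"
  unfolding gops_def gadj_def by auto
lemma gadj_gadj[simp]: "gadj (gadj A) = A"
  unfolding gadj_def by simp
lemma gadj_gmul: "gadj (gmul D A B) = gmul D (gadj B) (gadj A)"
  unfolding gadj_def gmul_def by (intro ext) (simp add: cnj_sum mult.commute)
lemma gmul_assoc: "gmul D (gmul D A B) C = gmul D A (gmul D B C)"
  unfolding gmul_def
  by (intro ext, simp only: sum_distrib_left sum_distrib_right mult.assoc, rule sum.swap)

lemma mel_lin: "mel D (\<lambda>x y. a * A x y + b * B x y) u v = a * mel D A u v + b * mel D B u v"
  unfolding mel_def ipv_def appl_def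
  by (simp add: distrib_left distrib_right sum.distrib sum_distrib_left mult.assoc mult.left_commute)

lemma mel_sum: "mel D (\<lambda>x y. \<Sum>k\<in>K. F k x y) u v = (\<Sum>k\<in>K. mel D (F k) u v)"
  unfolding mel_def ipv_def appl_def
  by (simp only: sum_distrib_left sum_distrib_right, subst (2) sum.swap, subst sum.swap,
      simp only: mult.assoc mult.left_commute)

lemma mel_term: "mel D (\<lambda>x y. a * (P x y - (Q x y + R x y) / 2)) u v
    = a * (mel D P u v - (mel D Q u v + mel D R u v) / 2)"
proof -
  have "(\<lambda>x y. a * (P x y - (Q x y + R x y) / 2)) =
        (\<lambda>x y. a * P x y + (- a / 2) * (\<lambda>x y. 1 * Q x y + 1 * R x y) x y)"
    by (intro ext) (simp add: field_simps)
  then show ?thesis by (simp only: mel_lin) (simp add: field_simps)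
qed

lemma mel_zero_op: "mel D (\<lambda>x y. 0) u v = 0"
  unfolding mel_def ipv_def appl_def by simp

lemma sum_if_left: fixes f g :: "_ \<Rightarrow> complex" shows "finite B \<Longrightarrow> a \<in> B \<Longrightarrow> (\<Sum>x\<in>B. (if x = a then f x else 0) * g x) = f a * g a"
proof -
  assume "finite B" "a \<in> B"
  have "(\<Sum>x\<in>B. (if x = a then f x else 0) * g x) = (\<Sum>x\<in>B. if x = a then f x * g x else 0)"
    by (rule sum.cong) auto
  then show ?thesis using \<open>finite B\<close> \<open>a \<in> B\<close> by (simp add: sum.delta)
qed
lemma sum_if_right: fixes f g :: "_ \<Rightarrow> complex" shows "finite B \<Longrightarrow> a \<in> B \<Longrightarrow> (\<Sum>x\<in>B. g x * (if x = a then f x else 0)) = g a * f a"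
proof -
  assume "finite B" "a \<in> B"
  have "(\<Sum>x\<in>B. g x * (if x = a then f x else 0)) = (\<Sum>x\<in>B. if x = a then g x * f x else 0)"
    by (rule sum.cong) auto
  then show ?thesis using \<open>finite B\<close> \<open>a \<in> B\<close> by (simp add: sum.delta)
qed

lemma herm_ker:
  assumes D: "finite D" and K: "finite K" and T: "\<forall>k\<in>K. gops D (T k)"
    and cpos: "\<forall>k\<in>K. c k > 0" and adjc: "\<forall>k\<in>K. \<exists>k'\<in>K. T k' = gadj (T k)"
    and X: "gops D X" "herm D X" and L0: "gLind D K T c X = (\<lambda>x y. 0)"
  shows "\<forall>k\<in>K. gmul D X (T k) = gmul D (T k) X"
proof -
  obtain B \<mu> where on: "orthonormal D B" and cpl: "\<forall>v\<in>vsupp D. v = lcomb B (\<lambda>b. ipv D b v)"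
    and eig: "\<forall>b\<in>B. appl D X b = (\<lambda>x. complex_of_real (\<mu> b) * b x)"
    using herm_eigenbasis[OF D gops_rsupp[OF X(1)] X(2)] by blast
  have fB: "finite B" using on unfolding orthonormal_def by simp
  have melX: "mel D X a' a = (if a' = a then complex_of_real (\<mu> a) else 0)" if "a' \<in> B" "a \<in> B" for a' a
  proof -
    have "mel D X a' a = complex_of_real (\<mu> a) * ipv D a' a"
      unfolding mel_def using eig that by (simp add: ipv_scale_right)
    then show ?thesis using on that unfolding orthonormal_def by auto
  qed
  have melX': "mel D X a a' = (if a' = a then complex_of_real (\<mu> a) else 0)" if "a' \<in> B" "a \<in> B" for a' a
    using melX[OF that(2) that(1)] by auto
  define t where "t k a b = mel D (T k) a b" for k a b
  have rT: "rsupp D (T k)" if "k \<in> K" for k using T that gops_rsupp by blast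
  have rX: "rsupp D X" using gops_rsupp[OF X(1)] .
  have rTT: "rsupp D (gmul D (gadj (T k)) (T k))" if "k \<in> K" for k
    using T that by (intro gops_rsupp gops_gmul gops_gadj) auto
  have mTT: "mel D (gmul D (gadj (T k)) (T k)) b b = complex_of_real (\<Sum>a\<in>B. (cmod (t k a b))\<^sup>2)"
    if "k \<in> K" "b \<in> B" for k b
  proof -
    have "mel D (gmul D (gadj (T k)) (T k)) b b = (\<Sum>a\<in>B. cnj (t k a b) * t k a b)"
      unfolding mel_gmul[OF on cpl rT[OF that(1)]] mel_gadj t_def ..
    then show ?thesis by (simp only: cnj_mult_self of_real_sum)
  qed
  have termk: "mel D (\<lambda>x y. complex_of_real (c k) *
      (gmul D (gmul D (gadj (T k)) X) (T k) x y
       - (gmul D (gmul D (gadj (T k)) (T k)) X x y + gmul D X (gmul D (gadj (T k)) (T k)) x y) / 2)) b b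
     = complex_of_real (c k * (\<Sum>a\<in>B. (\<mu> a - \<mu> b) * (cmod (t k a b))\<^sup>2))"
    if k: "k \<in> K" and b: "b \<in> B" for k b
  proof -
    have m1: "mel D (gmul D (gmul D (gadj (T k)) X) (T k)) b b
        = complex_of_real (\<Sum>a\<in>B. \<mu> a * (cmod (t k a b))\<^sup>2)"
    proof -
      have "mel D (gmul D (gmul D (gadj (T k)) X) (T k)) b b
          = (\<Sum>a\<in>B. mel D (gmul D (gadj (T k)) X) b a * t k a b)"
        unfolding mel_gmul[OF on cpl rT[OF k]] t_def ..
      also have "\<dots> = (\<Sum>a\<in>B. (cnj (t k a b) * complex_of_real (\<mu> a)) * t k a b)"
      proof (rule sum.cong, simp)
        fix a assume a: "a \<in> B"
        have "mel D (gmul D (gadj (T k)) X) b a = (\<Sum>a'\<in>B. cnj (t k a' b) * (if a' = a then complex_of_real (\<mu> a') else 0))"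
          unfolding mel_gmul[OF on cpl rX] mel_gadj t_def
          by (rule sum.cong, simp, simp add: melX a)
        also have "\<dots> = cnj (t k a b) * complex_of_real (\<mu> a)" by (rule sum_if_right[OF fB a])
        finally show "mel D (gmul D (gadj (T k)) X) b a * t k a b = (cnj (t k a b) * complex_of_real (\<mu> a)) * t k a b"
          by simp
      qed
      also have "\<dots> = complex_of_real (\<Sum>a\<in>B. \<mu> a * (cmod (t k a b))\<^sup>2)"
        unfolding of_real_sum
        by (rule sum.cong, simp, simp only: of_real_mult cnj_mult_self[symmetric] mult.commute mult.left_commute)
      finally show ?thesis .
    qed
    have m2: "mel D (gmul D (gmul D (gadj (T k)) (T k)) X) b b
        = complex_of_real (\<mu> b * (\<Sum>a\<in>B. (cmod (t k a b))\<^sup>2))"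
    proof -
      have "mel D (gmul D (gmul D (gadj (T k)) (T k)) X) b b
          = (\<Sum>a\<in>B. mel D (gmul D (gadj (T k)) (T k)) b a * (if a = b then complex_of_real (\<mu> a) else 0))"
        unfolding mel_gmul[OF on cpl rX] by (rule sum.cong, simp, simp add: melX b)
      also have "\<dots> = mel D (gmul D (gadj (T k)) (T k)) b b * complex_of_real (\<mu> b)"
        by (rule sum_if_right[OF fB b])
      finally show ?thesis using mTT[OF k b] by (simp add: mult.commute)
    qed
    have m3: "mel D (gmul D X (gmul D (gadj (T k)) (T k))) b b
        = complex_of_real (\<mu> b * (\<Sum>a\<in>B. (cmod (t k a b))\<^sup>2))"
    proof -
      have "mel D (gmul D X (gmul D (gadj (T k)) (T k))) b b
          = (\<Sum>a\<in>B. (if a = b then complex_of_real (\<mu> a) else 0) * mel D (gmul D (gadj (T k)) (T k)) a b)"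
        unfolding mel_gmul[OF on cpl rTT[OF k]] by (rule sum.cong, simp, simp add: melX' b)
      also have "\<dots> = complex_of_real (\<mu> b) * mel D (gmul D (gadj (T k)) (T k)) b b"
        by (rule sum_if_left[OF fB b])
      finally show ?thesis using mTT[OF k b] by simp
    qed
    have se: "(\<Sum>a\<in>B. (\<mu> a - \<mu> b) * (cmod (t k a b))\<^sup>2)
        = (\<Sum>a\<in>B. \<mu> a * (cmod (t k a b))\<^sup>2) - \<mu> b * (\<Sum>a\<in>B. (cmod (t k a b))\<^sup>2)"
      by (simp add: left_diff_distrib sum_subtractf sum_distrib_left)
    define S1 where "S1 = (\<Sum>a\<in>B. \<mu> a * (cmod (t k a b))\<^sup>2)"
    define S0 where "S0 = (\<Sum>a\<in>B. (cmod (t k a b))\<^sup>2)"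
    have fin: "complex_of_real (c k) * (complex_of_real S1 - (complex_of_real (\<mu> b * S0) + complex_of_real (\<mu> b * S0)) / 2)
       = complex_of_real (c k * (S1 - \<mu> b * S0))" by (simp add: field_simps)
    show ?thesis unfolding mel_term m1 m2 m3 se S1_def[symmetric] S0_def[symmetric] by (rule fin)
  qed
  have eq: "\<forall>b\<in>B. (\<Sum>k\<in>K. c k * (\<Sum>a\<in>B. (\<mu> a - \<mu> b) * (cmod (t k a b))\<^sup>2)) = 0"
  proof
    fix b assume b: "b \<in> B"
    have "0 = mel D (gLind D K T c X) b b" unfolding L0 mel_zero_op ..
    also have "\<dots> = (\<Sum>k\<in>K. complex_of_real (c k * (\<Sum>a\<in>B. (\<mu> a - \<mu> b) * (cmod (t k a b))\<^sup>2)))"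
      unfolding gLind_def mel_sum by (rule sum.cong, simp, rule termk, simp_all add: b)
    also have "\<dots> = complex_of_real (\<Sum>k\<in>K. c k * (\<Sum>a\<in>B. (\<mu> a - \<mu> b) * (cmod (t k a b))\<^sup>2))"
      by (simp only: of_real_sum)
    finally have "complex_of_real (\<Sum>k\<in>K. c k * (\<Sum>a\<in>B. (\<mu> a - \<mu> b) * (cmod (t k a b))\<^sup>2)) = 0"
      by (rule sym)
    then show "(\<Sum>k\<in>K. c k * (\<Sum>a\<in>B. (\<mu> a - \<mu> b) * (cmod (t k a b))\<^sup>2)) = 0"
      by (simp only: of_real_eq_0_iff)
  qed
  have adjt: "\<forall>k\<in>K. \<exists>k'\<in>K. \<forall>a\<in>B. \<forall>b\<in>B. t k' a b = cnj (t k b a)"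
  proof
    fix k assume "k \<in> K"
    then obtain k' where "k' \<in> K" "T k' = gadj (T k)" using adjc by blast
    then show "\<exists>k'\<in>K. \<forall>a\<in>B. \<forall>b\<in>B. t k' a b = cnj (t k b a)" unfolding t_def
      by (intro bexI[of _ k']) (simp_all add: mel_gadj)
  qed
  have tz: "\<forall>k\<in>K. \<forall>a\<in>B. \<forall>b\<in>B. \<mu> a \<noteq> \<mu> b \<longrightarrow> t k a b = 0"
    by (rule diag_lemma[OF fB K cpos adjt eq])
  show ?thesis
  proof
    fix k assume k: "k \<in> K"
    define Z where "Z = (\<lambda>x y. 1 * gmul D X (T k) x y + (-1) * gmul D (T k) X x y)"
    have mZ: "mel D Z a b = 0" if a: "a \<in> B" and b: "b \<in> B" for a b
    proof -
      have "mel D (gmul D X (T k)) a b = complex_of_real (\<mu> a) * t k a b"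
      proof -
        have "mel D (gmul D X (T k)) a b = (\<Sum>a'\<in>B. (if a' = a then complex_of_real (\<mu> a') else 0) * t k a' b)"
          unfolding mel_gmul[OF on cpl rT[OF k]] t_def by (rule sum.cong, simp, simp add: melX' a)
        then show ?thesis by (simp add: sum_if_left[OF fB a])
      qed
      moreover have "mel D (gmul D (T k) X) a b = t k a b * complex_of_real (\<mu> b)"
      proof -
        have "mel D (gmul D (T k) X) a b = (\<Sum>a'\<in>B. t k a a' * (if a' = b then complex_of_real (\<mu> a') else 0))"
          unfolding mel_gmul[OF on cpl rX] t_def by (rule sum.cong, simp, simp add: melX b)
        then show ?thesis by (simp add: sum_if_right[OF fB b])
      qed
      ultimately have "mel D Z a b = (complex_of_real (\<mu> a) - complex_of_real (\<mu> b)) * t k a b"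
        unfolding Z_def mel_lin by (simp add: algebra_simps)
      then show ?thesis using tz k a b by (cases "\<mu> a = \<mu> b") auto
    qed
    have Zs: "rsupp D Z" "\<forall>x y. y \<notin> D \<longrightarrow> Z x y = 0"
      using T k X(1) unfolding Z_def gops_def rsupp_def gmul_def by auto
    have "Z = (\<lambda>x y. 0)" by (rule mel_zero[OF on cpl Zs _ D]) (use mZ in auto)
    then show "gmul D X (T k) = gmul D (T k) X"
      unfolding Z_def by (intro ext) (metis (mono_tags) eq_iff_diff_eq_0 mult_1 mult_minus1 diff_conv_add_uminus)
  qed
qed


lemma gmul_lin_left: "gmul D (\<lambda>x y. a * X x y + b * Y x y) C = (\<lambda>x y. a * gmul D X C x y + b * gmul D Y C x y)"
  unfolding gmul_def by (intro ext) (simp add: distrib_right sum.distrib sum_distrib_left mult.assoc)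
lemma gmul_lin_right: "gmul D C (\<lambda>x y. a * X x y + b * Y x y) = (\<lambda>x y. a * gmul D C X x y + b * gmul D C Y x y)"
  unfolding gmul_def by (intro ext) (simp add: distrib_left sum.distrib sum_distrib_left mult.left_commute)
lemma gadj_lin: "gadj (\<lambda>x y. a * X x y + b * Y x y) = (\<lambda>x y. cnj a * gadj X x y + cnj b * gadj Y x y)"
  unfolding gadj_def by simp

lemma gLind_lin: "gLind D K T c (\<lambda>x y. a * X x y + b * Y x y)
    = (\<lambda>x y. a * gLind D K T c X x y + b * gLind D K T c Y x y)"
proof (intro ext)
  fix x y
  show "gLind D K T c (\<lambda>x y. a * X x y + b * Y x y) x y = a * gLind D K T c X x y + b * gLind D K T c Y x y"
    unfolding gLind_def gmul_lin_left gmul_lin_right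
    by (simp only: sum_distrib_left sum.distrib[symmetric], rule sum.cong, simp, simp add: field_simps)
qed

lemma gLind_gadj:
  assumes "\<forall>k\<in>K. True"
  shows "gLind D K T c (gadj X) = gadj (gLind D K T c X)"
proof (intro ext)
  fix x y
  have "gadj (gLind D K T c X) x y = (\<Sum>k\<in>K. complex_of_real (c k) *
      (gadj (gmul D (gmul D (gadj (T k)) X) (T k)) x y
       - (gadj (gmul D (gmul D (gadj (T k)) (T k)) X) x y + gadj (gmul D X (gmul D (gadj (T k)) (T k))) x y) / 2))"
    unfolding gLind_def by (simp add: gadj_def cnj_sum)
  also have "\<dots> = gLind D K T c (gadj X) x y"
    unfolding gLind_def gadj_gmul gadj_gadj gmul_assoc
    by (rule sum.cong, simp, simp add: algebra_simps)
  finally show "gLind D K T c (gadj X) x y = gadj (gLind D K T c X) x y" by simp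
qed

lemma gLind_iff:
  assumes D: "finite D" and K: "finite K" and T: "\<forall>k\<in>K. gops D (T k)"
    and cpos: "\<forall>k\<in>K. c k > 0" and adjc: "\<forall>k\<in>K. \<exists>k'\<in>K. T k' = gadj (T k)"
    and X: "gops D X"
  shows "gLind D K T c X = (\<lambda>x y. 0) \<longleftrightarrow> (\<forall>k\<in>K. gmul D X (T k) = gmul D (T k) X)"
proof
  assume comm: "\<forall>k\<in>K. gmul D X (T k) = gmul D (T k) X"
  show "gLind D K T c X = (\<lambda>x y. 0)"
  proof (intro ext)
    fix x y
    have "\<forall>k\<in>K. gmul D (gmul D (gadj (T k)) X) (T k) = gmul D (gmul D (gadj (T k)) (T k)) X
       \<and> gmul D X (gmul D (gadj (T k)) (T k)) = gmul D (gmul D (gadj (T k)) (T k)) X"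
    proof
      fix k assume k: "k \<in> K"
      obtain k' where k': "k' \<in> K" "T k' = gadj (T k)" using adjc k by blast
      have c1: "gmul D X (T k) = gmul D (T k) X" using comm k by blast
      have c2: "gmul D X (gadj (T k)) = gmul D (gadj (T k)) X" using comm k' by metis
      show "gmul D (gmul D (gadj (T k)) X) (T k) = gmul D (gmul D (gadj (T k)) (T k)) X
       \<and> gmul D X (gmul D (gadj (T k)) (T k)) = gmul D (gmul D (gadj (T k)) (T k)) X"
        by (metis c1 c2 gmul_assoc)
    qed
    then show "gLind D K T c X x y = 0" unfolding gLind_def by (intro sum.neutral) simp
  qed
next
  assume L0: "gLind D K T c X = (\<lambda>x y. 0)"
  have L0': "gLind D K T c (gadj X) = (\<lambda>x y. 0)"
    by (simp add: gLind_gadj L0) (simp add: gadj_def)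
  define A where "A = (\<lambda>x y. (1/2) * X x y + (1/2) * gadj X x y)"
  define B where "B = (\<lambda>x y. (- \<i>/2) * X x y + (\<i>/2) * gadj X x y)"
  have LA: "gLind D K T c A = (\<lambda>x y. 0)" unfolding A_def gLind_lin L0 L0' by simp
  have LB: "gLind D K T c B = (\<lambda>x y. 0)" unfolding B_def gLind_lin L0 L0' by simp
  have opA: "gops D A" "gops D B" using X unfolding A_def B_def gops_def gadj_def by auto
  have hA: "herm D A" unfolding herm_def A_def gadj_def by (simp add: field_simps)
  have hB: "herm D B" unfolding herm_def B_def gadj_def by (simp add: field_simps)
  have cA: "\<forall>k\<in>K. gmul D A (T k) = gmul D (T k) A" by (rule herm_ker[OF D K T cpos adjc opA(1) hA LA])
  have cB: "\<forall>k\<in>K. gmul D B (T k) = gmul D (T k) B" by (rule herm_ker[OF D K T cpos adjc opA(2) hB LB])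
  have XAB: "X = (\<lambda>x y. 1 * A x y + \<i> * B x y)" unfolding A_def B_def by (intro ext) (simp add: field_simps)
  show "\<forall>k\<in>K. gmul D X (T k) = gmul D (T k) X"
  proof
    fix k assume k: "k \<in> K"
    show "gmul D X (T k) = gmul D (T k) X"
      by (subst (1 2) XAB, simp only: gmul_lin_left gmul_lin_right) (simp add: cA cB k)
  qed
qed




definition gid :: "'a set \<Rightarrow> 'a \<Rightarrow> 'a \<Rightarrow> complex" where
  "gid D = (\<lambda>x y. if x = y \<and> x \<in> D then 1 else 0)"

definition ipp :: "'a set \<Rightarrow> ('a \<times> 'a \<Rightarrow> complex) \<Rightarrow> ('a \<Rightarrow> 'a \<Rightarrow> complex) \<Rightarrow> complex" where
  "ipp D v m = (\<Sum>x\<in>D. \<Sum>y\<in>D. cnj (v (x,y)) * m x y)"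

definition munit :: "'a \<Rightarrow> 'a \<Rightarrow> 'a \<Rightarrow> 'a \<Rightarrow> complex" where
  "munit d c = (\<lambda>x y. if x = d \<and> y = c then 1 else 0)"

lemma gmul_sum_left: "gmul D (\<lambda>x y. \<Sum>k\<in>K. f k * A k x y) B = (\<lambda>x y. \<Sum>k\<in>K. f k * gmul D (A k) B x y)"
  unfolding gmul_def
  by (intro ext, simp only: sum_distrib_right sum_distrib_left mult.assoc, rule sum.swap)

lemma gmul_sum_right: "gmul D B (\<lambda>x y. \<Sum>k\<in>K. f k * A k x y) = (\<lambda>x y. \<Sum>k\<in>K. f k * gmul D B (A k) x y)"
proof (intro ext)
  fix x y
  have "gmul D B (\<lambda>x y. \<Sum>k\<in>K. f k * A k x y) x y = (\<Sum>z\<in>D. \<Sum>k\<in>K. f k * (B x z * A k z y))"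
    unfolding gmul_def by (simp only: sum_distrib_left mult.left_commute)
  also have "\<dots> = (\<Sum>k\<in>K. \<Sum>z\<in>D. f k * (B x z * A k z y))" by (rule sum.swap)
  also have "\<dots> = (\<Sum>k\<in>K. f k * gmul D B (A k) x y)"
    unfolding gmul_def by (simp only: sum_distrib_left)
  finally show "gmul D B (\<lambda>x y. \<Sum>k\<in>K. f k * A k x y) x y = (\<Sum>k\<in>K. f k * gmul D B (A k) x y)" .
qed

lemma gmul_sum_left1: "gmul D (\<lambda>x y. \<Sum>k\<in>K. A k x y) B = (\<lambda>x y. \<Sum>k\<in>K. gmul D (A k) B x y)"
  using gmul_sum_left[where f = "\<lambda>k. 1"] by simp
lemma gmul_sum_right1: "gmul D B (\<lambda>x y. \<Sum>k\<in>K. A k x y) = (\<lambda>x y. \<Sum>k\<in>K. gmul D B (A k) x y)"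
  using gmul_sum_right[where f = "\<lambda>k. 1"] by simp

lemma gadj_sum: "gadj (\<lambda>x y. \<Sum>k\<in>K. f k * A k x y) = (\<lambda>x y. \<Sum>k\<in>K. cnj (f k) * gadj (A k) x y)"
  unfolding gadj_def by (simp add: cnj_sum)

lemma ipp_adj:
  "ipp D o1 (gmul D (gadj a) (curry o2)) = cnj (ipp D o2 (gmul D a (curry o1)))"
proof -
  have "ipp D o1 (gmul D (gadj a) (curry o2)) = (\<Sum>x\<in>D. \<Sum>y\<in>D. \<Sum>z\<in>D. cnj (o1 (x,y)) * cnj (a z x) * o2 (z,y))"
    unfolding ipp_def gmul_def gadj_def by (simp only: sum_distrib_left curry_conv mult.assoc)
  also have "\<dots> = (\<Sum>x\<in>D. \<Sum>z\<in>D. \<Sum>y\<in>D. cnj (o1 (x,y)) * cnj (a z x) * o2 (z,y))"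
    by (rule sum.cong, simp, rule sum.swap)
  also have "\<dots> = (\<Sum>z\<in>D. \<Sum>x\<in>D. \<Sum>y\<in>D. cnj (o1 (x,y)) * cnj (a z x) * o2 (z,y))"
    by (rule sum.swap)
  also have "\<dots> = (\<Sum>z\<in>D. \<Sum>y\<in>D. \<Sum>x\<in>D. cnj (o1 (x,y)) * cnj (a z x) * o2 (z,y))"
    by (rule sum.cong, simp, rule sum.swap)
  also have "\<dots> = cnj (ipp D o2 (gmul D a (curry o1)))"
    unfolding ipp_def gmul_def
    by (simp only: sum_distrib_left cnj_sum complex_cnj_mult complex_cnj_cnj curry_conv mult.commute mult.left_commute)
  finally show ?thesis .
qed

lemma M_sum:
  assumes M0: "(\<lambda>x y. 0) \<in> M" and Madd: "\<forall>u\<in>M. \<forall>v\<in>M. (\<lambda>x y. u x y + v x y) \<in> M"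
    and Mscale: "\<forall>c. \<forall>u\<in>M. (\<lambda>x y. c * u x y) \<in> M"
    and K: "finite K" and F: "\<forall>k\<in>K. F k \<in> M"
  shows "(\<lambda>x y. \<Sum>k\<in>K. f k * F k x y) \<in> M"
  using K F
proof (induction K rule: finite_induct)
  case empty then show ?case using M0 by simp
next
  case (insert a K')
  have h1: "(\<lambda>x y. f a * F a x y) \<in> M" using Mscale insert by blast
  have h2: "(\<lambda>x y. \<Sum>k\<in>K'. f k * F k x y) \<in> M" using insert by blast
  have "(\<lambda>x y. f a * F a x y + (\<Sum>k\<in>K'. f k * F k x y)) \<in> M"
    using Madd[rule_format, OF h1 h2] by simp
  then show ?case using insert by simp
qed


lemma full_alg:
  assumes D: "finite D" and Mops: "\<forall>m\<in>M. gops D m"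
    and M0: "(\<lambda>x y. 0) \<in> M" and Madd: "\<forall>u\<in>M. \<forall>v\<in>M. (\<lambda>x y. u x y + v x y) \<in> M"
    and Mscale: "\<forall>c. \<forall>u\<in>M. (\<lambda>x y. c * u x y) \<in> M"
    and Mid: "gid D \<in> M" and Mmul: "\<forall>u\<in>M. \<forall>v\<in>M. gmul D u v \<in> M"
    and Madj: "\<forall>u\<in>M. gadj u \<in> M"
    and comm: "\<forall>Z. gops D Z \<longrightarrow> (\<forall>m\<in>M. gmul D Z m = gmul D m Z) \<longrightarrow> (\<exists>\<kappa>. Z = (\<lambda>x y. \<kappa> * gid D x y))"
  shows "\<forall>Y. gops D Y \<longrightarrow> Y \<in> M"
proof -
  define M2 where "M2 = {v. curry v \<in> M}"
  have sub: "subsp (D \<times> D) M2"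
    unfolding subsp_def
  proof (intro conjI ballI allI)
    show "M2 \<subseteq> vsupp (D \<times> D)"
    proof
      fix v assume "v \<in> M2"
      then have "gops D (curry v)" using Mops unfolding M2_def by blast
      then show "v \<in> vsupp (D \<times> D)" unfolding gops_def vsupp_def by (auto simp: curry_def)
    qed
    show "(\<lambda>x. 0) \<in> M2" unfolding M2_def curry_def using M0 by simp
    fix u v assume "u \<in> M2" "v \<in> M2"
    then show "(\<lambda>x. u x + v x) \<in> M2" unfolding M2_def curry_def using Madd[rule_format, of "curry u" "curry v"]
      by (simp add: curry_def)
  next
    fix c u assume "u \<in> M2"
    then show "(\<lambda>x. c * u x) \<in> M2" unfolding M2_def using Mscale[rule_format, of "curry u" c]
      by (simp add: curry_def)
  qed
  obtain O2 where on: "orthonormal (D \<times> D) O2" and O2M: "O2 \<subseteq> M2"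
    and cpl: "\<forall>m\<in>M2. m = lcomb O2 (\<lambda>b. ipv (D \<times> D) b m)"
    using onb_exists[OF _ sub] D by blast
  have fO: "finite O2" using on unfolding orthonormal_def by simp
  have OM: "curry b \<in> M" if "b \<in> O2" for b using O2M that unfolding M2_def by blast
  have Ov: "b p = 0" if "b \<in> O2" "p \<notin> D \<times> D" for b p
    using on that unfolding orthonormal_def vsupp_def by blast
  have ipv_ipp: "ipv (D \<times> D) b (case_prod m) = ipp D b m" for b m
    unfolding ipv_def ipp_def sum.cartesian_product by (rule sum.cong) auto
  have Mexp: "m = (\<lambda>x y. \<Sum>b\<in>O2. ipp D b m * curry b x y)" if "m \<in> M" for m
  proof -
    have "case_prod m \<in> M2" unfolding M2_def using that by simp
    then have "case_prod m = lcomb O2 (\<lambda>b. ipv (D \<times> D) b (case_prod m))" using cpl by blast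
    then have eq: "case_prod m = (\<lambda>p. \<Sum>b\<in>O2. ipp D b m * b p)" unfolding lcomb_def ipv_ipp .
    have "m x y = (\<Sum>b\<in>O2. ipp D b m * curry b x y)" for x y
      using fun_cong[OF eq, of "(x,y)"] by simp
    then show ?thesis by (intro ext)
  qed
  define Phi where "Phi Y = (\<lambda>x y. \<Sum>b\<in>O2. gmul D (gmul D (curry b) Y) (gadj (curry b)) x y)" for Y
  have Phicomm: "gmul D a (Phi Y) = gmul D (Phi Y) a" if a: "a \<in> M" for a Y
  proof -
    define \<alpha> where "\<alpha> b1 b = ipp D b1 (gmul D a (curry b))" for b1 b
    have e1: "gmul D a (curry b) = (\<lambda>x y. \<Sum>b1\<in>O2. \<alpha> b1 b * curry b1 x y)" if "b \<in> O2" for b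
      unfolding \<alpha>_def by (rule Mexp, rule Mmul[rule_format, OF a OM[OF that]])
    have e2: "gmul D (gadj a) (curry b1) = (\<lambda>x y. \<Sum>b\<in>O2. cnj (\<alpha> b1 b) * curry b x y)" if "b1 \<in> O2" for b1
    proof -
      have "gmul D (gadj a) (curry b1) \<in> M" using Mmul Madj a OM[OF that] by blast
      then show ?thesis unfolding \<alpha>_def ipp_adj[symmetric] by (rule Mexp)
    qed
    have "gmul D a (Phi Y) = (\<lambda>x y. \<Sum>b\<in>O2. gmul D (gmul D (gmul D a (curry b)) Y) (gadj (curry b)) x y)"
      unfolding Phi_def gmul_sum_right1 gmul_assoc ..
    also have "\<dots> = (\<lambda>x y. \<Sum>b\<in>O2. \<Sum>b1\<in>O2. \<alpha> b1 b * gmul D (gmul D (curry b1) Y) (gadj (curry b)) x y)"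
      by (intro ext sum.cong refl) (simp add: e1 gmul_sum_left del: curry_conv)
    also have "\<dots> = (\<lambda>x y. \<Sum>b1\<in>O2. \<Sum>b\<in>O2. \<alpha> b1 b * gmul D (gmul D (curry b1) Y) (gadj (curry b)) x y)"
      by (intro ext, rule sum.swap)
    also have "\<dots> = (\<lambda>x y. \<Sum>b1\<in>O2. gmul D (gmul D (curry b1) Y) (gadj (gmul D (gadj a) (curry b1))) x y)"
    proof (intro ext sum.cong refl)
      fix x y b1 assume b1: "b1 \<in> O2"
      have "gadj (gmul D (gadj a) (curry b1)) = (\<lambda>x y. \<Sum>b\<in>O2. \<alpha> b1 b * gadj (curry b) x y)"
        unfolding e2[OF b1] gadj_sum by (simp del: curry_conv)
      then show "(\<Sum>b\<in>O2. \<alpha> b1 b * gmul D (gmul D (curry b1) Y) (gadj (curry b)) x y)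
          = gmul D (gmul D (curry b1) Y) (gadj (gmul D (gadj a) (curry b1))) x y"
        by (simp add: gmul_sum_right)
    qed
    also have "\<dots> = gmul D (Phi Y) a"
      unfolding Phi_def gmul_sum_left1 gadj_gmul gadj_gadj gmul_assoc ..
    finally show ?thesis .
  qed
  have Phiops: "gops D (Phi Y)" for Y
    unfolding Phi_def gops_def gmul_def gadj_def
  proof (intro allI impI)
    fix x y :: 'a assume "x \<notin> D \<or> y \<notin> D"
    then show "(\<Sum>b\<in>O2. \<Sum>z\<in>D. (\<Sum>w\<in>D. curry b x w * Y w z) * cnj (curry b y z)) = 0"
      using Ov by (auto intro!: sum.neutral)
  qed
  define Fx where "Fx b c x y = (\<Sum>o2\<in>O2. o2 (x,b) * cnj (o2 (y,c)))" for b c x y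
  have PhiE: "Phi (munit b c) = (\<lambda>x y. Fx b c x y)" if "b \<in> D" "c \<in> D" for b c
  proof (intro ext)
    fix x y
    have "gmul D (gmul D (curry o2) (munit b c)) (gadj (curry o2)) x y = o2 (x,b) * cnj (o2 (y,c))" for o2
    proof -
      have g1: "gmul D (curry o2) (munit b c) x' w = (if w = c then o2 (x',b) else 0)" for x' w
      proof -
        have "gmul D (curry o2) (munit b c) x' w
            = (\<Sum>z\<in>D. o2 (x',z) * (if z = b then (\<lambda>z. if w = c then 1 else 0) z else 0))"
          unfolding gmul_def munit_def by (rule sum.cong) auto
        also have "\<dots> = o2 (x',b) * (if w = c then 1 else 0)" by (rule sum_if_right[OF D that(1)])
        finally show ?thesis by simp
      qed
      have "gmul D (gmul D (curry o2) (munit b c)) (gadj (curry o2)) x y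
          = (\<Sum>w\<in>D. (if w = c then (\<lambda>w. o2 (x,b)) w else 0) * cnj (o2 (y,w)))"
        unfolding gmul_def[of D "gmul D (curry o2) (munit b c)"] g1 gadj_def by simp
      also have "\<dots> = o2 (x,b) * cnj (o2 (y,c))" by (rule sum_if_left[OF D that(2)])
      finally show ?thesis .
    qed
    then show "Phi (munit b c) x y = Fx b c x y" unfolding Phi_def Fx_def by simp
  qed
  have Fdiag: "Fx b c x y = (if x = y then Fx b c b b else 0)"
    if "b \<in> D" "c \<in> D" "x \<in> D" "y \<in> D" for b c x y
  proof -
    have "\<forall>m\<in>M. gmul D (Phi (munit b c)) m = gmul D m (Phi (munit b c))"
      using Phicomm by metis
    then obtain \<kappa> where k: "Phi (munit b c) = (\<lambda>x y. \<kappa> * gid D x y)" using comm Phiops by blast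
    have "Fx b c x y = \<kappa> * gid D x y" for x y using fun_cong[OF fun_cong[OF k]] PhiE[OF that(1,2)] by metis
    then show ?thesis using that unfolding gid_def by simp
  qed
  have Fout: "Fx b c x y = 0" if "x \<notin> D" for b c x y
    unfolding Fx_def using Ov that by (auto intro!: sum.neutral)
  have ipp_gid: "ipp D o2 (gid D) = (\<Sum>x\<in>D. cnj (o2 (x,x)))" for o2
    unfolding ipp_def gid_def
    by (rule sum.cong, simp) (use D in \<open>simp add: if_distrib sum.delta sum.delta' cong: if_cong\<close>)
  have trace: "Fx d c d d = (if d = c then 1 else 0)" if d: "d \<in> D" and c: "c \<in> D" for d c
  proof -
    have "(\<Sum>a\<in>D. Fx a c a d) = (\<Sum>a\<in>D. if a = d then Fx d c d d else 0)"
    proof (rule sum.cong, simp)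
      fix a assume a: "a \<in> D"
      show "Fx a c a d = (if a = d then Fx d c d d else 0)"
      proof (cases "a = d")
        case False then show ?thesis using Fdiag[OF a c a d] by simp
      qed simp
    qed
    also have "\<dots> = Fx d c d d" using d D by simp
    finally have t1: "(\<Sum>a\<in>D. Fx a c a d) = Fx d c d d" .
    have "(\<Sum>a\<in>D. Fx a c a d) = (\<Sum>o2\<in>O2. cnj (o2 (d,c)) * (\<Sum>a\<in>D. o2 (a,a)))"
      unfolding Fx_def by (subst sum.swap) (simp add: sum_distrib_left mult.commute)
    also have "\<dots> = cnj (\<Sum>o2\<in>O2. ipp D o2 (gid D) * o2 (d,c))"
      unfolding ipp_gid by (simp add: cnj_sum mult.commute)
    also have "\<dots> = cnj (gid D d c)" using fun_cong[OF fun_cong[OF Mexp[OF Mid]], of d c] by simp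
    also have "\<dots> = (if d = c then 1 else 0)" using d unfolding gid_def by simp
    finally show ?thesis using t1 by simp
  qed
  have Emem: "munit d c \<in> M" if d: "d \<in> D" and c: "c \<in> D" for d c
  proof -
    define P where "P = (\<lambda>x y. \<Sum>b\<in>O2. ipp D b (munit d c) * curry b x y)"
    have PM: "P \<in> M" unfolding P_def by (rule M_sum[OF M0 Madd Mscale fO]) (use OM in blast)
    have ippE: "ipp D b (munit d c) = cnj (b (d,c))" for b
    proof -
      have "ipp D b (munit d c) = (\<Sum>x\<in>D. if x = d then cnj (b (d,c)) else 0)"
        unfolding ipp_def munit_def
      proof (rule sum.cong, simp)
        fix x assume "x \<in> D"
        show "(\<Sum>y\<in>D. cnj (b (x, y)) * (if x = d \<and> y = c then 1 else 0)) = (if x = d then cnj (b (d, c)) else 0)"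
        proof (cases "x = d")
          case True
          have "(\<Sum>y\<in>D. cnj (b (x, y)) * (if x = d \<and> y = c then 1 else 0))
              = (\<Sum>y\<in>D. cnj (b (x, y)) * (if y = c then (\<lambda>_. 1) y else 0))" using True by simp
          also have "\<dots> = cnj (b (x, c))" using sum_if_right[OF D c] by simp
          finally show ?thesis using True by simp
        qed simp
      qed
      also have "\<dots> = cnj (b (d,c))" using d D by simp
      finally show ?thesis .
    qed
    have "P = munit d c"
    proof (intro ext)
      fix x y
      have Pxy: "P x y = Fx y c x d" unfolding P_def Fx_def ippE by (simp add: mult.commute)
      show "P x y = munit d c x y"
      proof (cases "x \<in> D")
        case False
        then show ?thesis using Pxy Fout d unfolding munit_def by auto
      next
        case x: True
        show ?thesis
        proof (cases "y \<in> D")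
          case False
          then have "P x y = 0" unfolding P_def using Ov by (auto intro!: sum.neutral)
          then show ?thesis using False c unfolding munit_def by auto
        next
          case y: True
          show ?thesis using Pxy Fdiag[OF y c x d] trace[OF y c] unfolding munit_def by auto
        qed
      qed
    qed
    then show ?thesis using PM by simp
  qed
  show ?thesis
  proof (intro allI impI)
    fix Y assume Y: "gops D Y"
    have inner: "(\<lambda>x y. \<Sum>c\<in>D. Y d c * munit d c x y) \<in> M" if "d \<in> D" for d
      by (rule M_sum[OF M0 Madd Mscale D]) (use Emem that in blast)
    have "(\<lambda>x y. \<Sum>d\<in>D. 1 * (\<lambda>x y. \<Sum>c\<in>D. Y d c * munit d c x y) x y) \<in> M"
      by (rule M_sum[OF M0 Madd Mscale D, where F = "\<lambda>d. (\<lambda>x y. \<Sum>c\<in>D. Y d c * munit d c x y)"])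
         (use inner in blast)
    moreover have "(\<lambda>x y. \<Sum>d\<in>D. 1 * (\<lambda>x y. \<Sum>c\<in>D. Y d c * munit d c x y) x y) = Y"
    proof (intro ext)
      fix x y
      have i1: "(\<Sum>c\<in>D. Y d c * munit d c x y) = (if x = d then (if y \<in> D then Y d y else 0) else 0)" for d
      proof (cases "x = d")
        case True
        have "(\<Sum>c\<in>D. Y d c * munit d c x y) = (\<Sum>c\<in>D. if y = c then Y d c else 0)"
          unfolding munit_def using True by (intro sum.cong) auto
        then show ?thesis using True D by simp
      next
        case False then show ?thesis unfolding munit_def by simp
      qed
      have "(\<Sum>d\<in>D. \<Sum>c\<in>D. Y d c * munit d c x y) = (\<Sum>d\<in>D. if x = d then (if y \<in> D then Y d y else 0) else 0)"
        using i1 by simp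
      also have "\<dots> = (if x \<in> D \<and> y \<in> D then Y x y else 0)" using D by simp
      also have "\<dots> = Y x y" using Y unfolding gops_def by auto
      finally show "(\<Sum>d\<in>D. 1 * (\<lambda>x y. \<Sum>c\<in>D. Y d c * munit d c x y) x y) = Y x y" by simp
    qed
    ultimately show "Y \<in> M" by simp
  qed
qed




definition gfreq :: "'a set \<Rightarrow> real set \<Rightarrow> (real \<Rightarrow> 'a \<Rightarrow> 'a \<Rightarrow> complex) \<Rightarrow> ('a \<Rightarrow> 'a \<Rightarrow> complex) \<Rightarrow> real \<Rightarrow> 'a \<Rightarrow> 'a \<Rightarrow> complex" where
  "gfreq D ev P Q \<omega> = (\<lambda>x y. \<Sum>l\<in>ev. \<Sum>l'\<in>ev. if l - l' = \<omega> then gmul D (gmul D (P l) Q) (P l') x y else 0)"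

lemma gmul_dsum:
  "gmul D (\<lambda>x y. \<Sum>a\<in>A. \<Sum>b\<in>B. F a b x y) (\<lambda>x y. \<Sum>c\<in>C. \<Sum>d\<in>E. G c d x y)
   = (\<lambda>x y. \<Sum>a\<in>A. \<Sum>b\<in>B. \<Sum>c\<in>C. \<Sum>d\<in>E. gmul D (F a b) (G c d) x y)"
proof (intro ext)
  fix x y
  have "gmul D (\<lambda>x y. \<Sum>a\<in>A. \<Sum>b\<in>B. F a b x y) (\<lambda>x y. \<Sum>c\<in>C. \<Sum>d\<in>E. G c d x y) x y
      = (\<Sum>z\<in>D. \<Sum>a\<in>A. \<Sum>b\<in>B. \<Sum>c\<in>C. \<Sum>d\<in>E. F a b x z * G c d z y)"
    unfolding gmul_def by (simp only: sum_distrib_right, simp only: sum_distrib_left)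
  also have "\<dots> = (\<Sum>a\<in>A. \<Sum>z\<in>D. \<Sum>b\<in>B. \<Sum>c\<in>C. \<Sum>d\<in>E. F a b x z * G c d z y)"
    by (rule sum.swap)
  also have "\<dots> = (\<Sum>a\<in>A. \<Sum>b\<in>B. \<Sum>z\<in>D. \<Sum>c\<in>C. \<Sum>d\<in>E. F a b x z * G c d z y)"
    by (rule sum.cong, simp, rule sum.swap)
  also have "\<dots> = (\<Sum>a\<in>A. \<Sum>b\<in>B. \<Sum>c\<in>C. \<Sum>z\<in>D. \<Sum>d\<in>E. F a b x z * G c d z y)"
    by (rule sum.cong, simp, rule sum.cong, simp, rule sum.swap)
  also have "\<dots> = (\<Sum>a\<in>A. \<Sum>b\<in>B. \<Sum>c\<in>C. \<Sum>d\<in>E. \<Sum>z\<in>D. F a b x z * G c d z y)"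
    by (rule sum.cong, simp, rule sum.cong, simp, rule sum.cong, simp, rule sum.swap)
  also have "\<dots> = (\<Sum>a\<in>A. \<Sum>b\<in>B. \<Sum>c\<in>C. \<Sum>d\<in>E. gmul D (F a b) (G c d) x y)"
    unfolding gmul_def ..
  finally show "gmul D (\<lambda>x y. \<Sum>a\<in>A. \<Sum>b\<in>B. F a b x y) (\<lambda>x y. \<Sum>c\<in>C. \<Sum>d\<in>E. G c d x y) x y
      = (\<Sum>a\<in>A. \<Sum>b\<in>B. \<Sum>c\<in>C. \<Sum>d\<in>E. gmul D (F a b) (G c d) x y)" .
qed

lemma gmul_if: "gmul D (\<lambda>x y. if c1 then A x y else 0) (\<lambda>x y. if c2 then B x y else 0)
   = (\<lambda>x y. if c1 \<and> c2 then gmul D A B x y else 0)"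
  unfolding gmul_def by (intro ext) (cases c1; cases c2; simp)

lemma gmul_zero_left: "gmul D (\<lambda>x y. 0) A = (\<lambda>x y. 0)" unfolding gmul_def by simp
lemma gmul_zero_right: "gmul D A (\<lambda>x y. 0) = (\<lambda>x y. 0)" unfolding gmul_def by simp

lemma gmul_gid_right: "\<forall>x y. y \<notin> D \<longrightarrow> A x y = 0 \<Longrightarrow> finite D \<Longrightarrow> gmul D A (gid D) = A"
  unfolding gmul_def gid_def
  by (intro ext) (auto simp: if_distrib sum.delta sum.delta' cong: if_cong)
lemma gmul_gid_left: assumes "rsupp D A" "finite D" shows "gmul D (gid D) A = A"
proof (intro ext)
  fix x y
  show "gmul D (gid D) A x y = A x y"
  proof (cases "x \<in> D")
    case True
    have "gmul D (gid D) A x y = (\<Sum>z\<in>D. (if z = x then (\<lambda>z. 1) z else 0) * A z y)"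
      unfolding gmul_def gid_def using True by (intro sum.cong) auto
    also have "\<dots> = A x y" using sum_if_left[OF assms(2) True] by simp
    finally show ?thesis .
  next
    case False then show ?thesis using assms(1) unfolding gmul_def gid_def rsupp_def by simp
  qed
qed

locale specd =
  fixes D :: "'a set" and ev :: "real set" and P :: "real \<Rightarrow> 'a \<Rightarrow> 'a \<Rightarrow> complex"
  assumes D: "finite D" and ev: "finite ev"
    and Pops: "\<forall>l\<in>ev. gops D (P l)" and Padj: "\<forall>l\<in>ev. gadj (P l) = P l"
    and Pidem: "\<forall>l\<in>ev. gmul D (P l) (P l) = P l"
    and Porth: "\<forall>l\<in>ev. \<forall>m\<in>ev. l \<noteq> m \<longrightarrow> gmul D (P l) (P m) = (\<lambda>x y. 0)"
    and Psum: "(\<lambda>x y. \<Sum>l\<in>ev. P l x y) = gid D"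
begin

definition blk where "blk l m Q = gmul D (gmul D (P l) Q) (P m)"

lemma gfreq_blk: "gfreq D ev P Q \<omega> = (\<lambda>x y. \<Sum>l\<in>ev. \<Sum>l'\<in>ev. (\<lambda>x y. if l - l' = \<omega> then blk l l' Q x y else 0) x y)"
  unfolding gfreq_def blk_def by simp

lemma blk_mul:
  assumes Q1: "\<forall>x y. y \<notin> D \<longrightarrow> Q1 x y = 0" and l: "l \<in> ev" and l': "l' \<in> ev"
  shows "blk l l' (gmul D Q1 Q2) = (\<lambda>x y. \<Sum>m\<in>ev. gmul D (blk l m Q1) (blk m l' Q2) x y)"
proof -
  have "gmul D (blk l m Q1) (blk m l' Q2) = gmul D (gmul D (gmul D (P l) Q1) (P m)) (gmul D Q2 (P l'))"
    if m: "m \<in> ev" for m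
  proof -
    have "gmul D (blk l m Q1) (blk m l' Q2) = gmul D (gmul D (gmul D (P l) Q1) (gmul D (P m) (P m))) (gmul D Q2 (P l'))"
      unfolding blk_def by (simp only: gmul_assoc)
    then show ?thesis using Pidem m by simp
  qed
  then have "(\<lambda>x y. \<Sum>m\<in>ev. gmul D (blk l m Q1) (blk m l' Q2) x y)
      = (\<lambda>x y. \<Sum>m\<in>ev. gmul D (gmul D (gmul D (P l) Q1) (P m)) (gmul D Q2 (P l')) x y)"
    by (intro ext sum.cong) auto
  also have "\<dots> = gmul D (gmul D (gmul D (P l) Q1) (\<lambda>x y. \<Sum>m\<in>ev. P m x y)) (gmul D Q2 (P l'))"
    unfolding gmul_sum_right1 gmul_sum_left1 ..
  also have "\<dots> = gmul D (gmul D (P l) Q1) (gmul D Q2 (P l'))"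
  proof -
    have "gmul D (gmul D (P l) Q1) (gid D) = gmul D (P l) Q1"
      by (rule gmul_gid_right[OF _ D]) (use Q1 in \<open>simp add: gmul_def\<close>)
    then show ?thesis unfolding Psum by simp
  qed
  also have "\<dots> = blk l l' (gmul D Q1 Q2)" unfolding blk_def by (simp only: gmul_assoc)
  finally show ?thesis by simp
qed

lemma blk_orth:
  assumes "m \<in> ev" "m' \<in> ev" "m \<noteq> m'"
  shows "gmul D (blk l m Q1) (blk m' l' Q2) = (\<lambda>x y. 0)"
proof -
  have "gmul D (blk l m Q1) (blk m' l' Q2) = gmul D (gmul D (P l) Q1) (gmul D (gmul D (P m) (P m')) (gmul D Q2 (P l')))"
    unfolding blk_def by (simp only: gmul_assoc)
  then show ?thesis using Porth assms by (simp add: gmul_zero_left gmul_zero_right)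
qed

lemma gfreq_mul:
  assumes Q1: "\<forall>x y. y \<notin> D \<longrightarrow> Q1 x y = 0"
  shows "gfreq D ev P (gmul D Q1 Q2) \<omega> = (\<lambda>x y. \<Sum>\<omega>1\<in>bohr ev. gmul D (gfreq D ev P Q1 \<omega>1) (gfreq D ev P Q2 (\<omega> - \<omega>1)) x y)"
proof (intro ext)
  fix x y
  have step1: "gmul D (gfreq D ev P Q1 \<omega>1) (gfreq D ev P Q2 (\<omega> - \<omega>1)) x y
      = (\<Sum>l\<in>ev. \<Sum>m\<in>ev. \<Sum>l'\<in>ev. if l - m = \<omega>1 \<and> m - l' = \<omega> - \<omega>1 then gmul D (blk l m Q1) (blk m l' Q2) x y else 0)"
    for \<omega>1
  proof -
    have "gmul D (gfreq D ev P Q1 \<omega>1) (gfreq D ev P Q2 (\<omega> - \<omega>1)) x y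
      = (\<Sum>l\<in>ev. \<Sum>m\<in>ev. \<Sum>m'\<in>ev. \<Sum>l'\<in>ev. (if l - m = \<omega>1 \<and> m' - l' = \<omega> - \<omega>1 then gmul D (blk l m Q1) (blk m' l' Q2) x y else 0))"
      unfolding gfreq_blk gmul_dsum gmul_if by simp
    also have "\<dots> = (\<Sum>l\<in>ev. \<Sum>m\<in>ev. \<Sum>l'\<in>ev. if l - m = \<omega>1 \<and> m - l' = \<omega> - \<omega>1 then gmul D (blk l m Q1) (blk m l' Q2) x y else 0)"
    proof (rule sum.cong, simp, rule sum.cong, simp)
      fix l m assume m: "m \<in> ev"
      have "(\<Sum>m'\<in>ev. \<Sum>l'\<in>ev. (if l - m = \<omega>1 \<and> m' - l' = \<omega> - \<omega>1 then gmul D (blk l m Q1) (blk m' l' Q2) x y else 0))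
          = (\<Sum>m'\<in>ev. if m' = m then (\<lambda>m'. \<Sum>l'\<in>ev. (if l - m = \<omega>1 \<and> m' - l' = \<omega> - \<omega>1 then gmul D (blk l m Q1) (blk m' l' Q2) x y else 0)) m' else 0)"
      proof (rule sum.cong, simp)
        fix m' assume m': "m' \<in> ev"
        show "(\<Sum>l'\<in>ev. (if l - m = \<omega>1 \<and> m' - l' = \<omega> - \<omega>1 then gmul D (blk l m Q1) (blk m' l' Q2) x y else 0))
          = (if m' = m then (\<lambda>m'. \<Sum>l'\<in>ev. (if l - m = \<omega>1 \<and> m' - l' = \<omega> - \<omega>1 then gmul D (blk l m Q1) (blk m' l' Q2) x y else 0)) m' else 0)"
        proof (cases "m' = m")
          case False
          have "m \<noteq> m'" using False by simp
          then have z: "gmul D (blk l m Q1) (blk m' l' Q2) x y = 0" for l'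
            using fun_cong[OF fun_cong[OF blk_orth[OF m m', of l Q1 l' Q2]], of x y] by simp
          show ?thesis using False by (simp, intro sum.neutral ballI, simp add: z)
        qed simp
      qed
      also have "\<dots> = (\<Sum>l'\<in>ev. (if l - m = \<omega>1 \<and> m - l' = \<omega> - \<omega>1 then gmul D (blk l m Q1) (blk m l' Q2) x y else 0))"
        using m ev by simp
      finally show "(\<Sum>m'\<in>ev. \<Sum>l'\<in>ev. (if l - m = \<omega>1 \<and> m' - l' = \<omega> - \<omega>1 then gmul D (blk l m Q1) (blk m' l' Q2) x y else 0))
          = (\<Sum>l'\<in>ev. (if l - m = \<omega>1 \<and> m - l' = \<omega> - \<omega>1 then gmul D (blk l m Q1) (blk m l' Q2) x y else 0))" .
    qed
    finally show ?thesis .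
  qed
  have "(\<Sum>\<omega>1\<in>bohr ev. gmul D (gfreq D ev P Q1 \<omega>1) (gfreq D ev P Q2 (\<omega> - \<omega>1)) x y)
      = (\<Sum>\<omega>1\<in>bohr ev. \<Sum>l\<in>ev. \<Sum>m\<in>ev. \<Sum>l'\<in>ev. if l - m = \<omega>1 \<and> m - l' = \<omega> - \<omega>1 then gmul D (blk l m Q1) (blk m l' Q2) x y else 0)"
    using step1 by simp
  also have "\<dots> = (\<Sum>l\<in>ev. \<Sum>m\<in>ev. \<Sum>l'\<in>ev. \<Sum>\<omega>1\<in>bohr ev. if l - m = \<omega>1 \<and> m - l' = \<omega> - \<omega>1 then gmul D (blk l m Q1) (blk m l' Q2) x y else 0)"
    by (subst sum.swap, rule sum.cong, simp, subst sum.swap, rule sum.cong, simp, subst sum.swap, simp)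
  also have "\<dots> = (\<Sum>l\<in>ev. \<Sum>m\<in>ev. \<Sum>l'\<in>ev. if l - l' = \<omega> then gmul D (blk l m Q1) (blk m l' Q2) x y else 0)"
  proof (rule sum.cong, simp, rule sum.cong, simp, rule sum.cong, simp)
    fix l m l' assume l: "l \<in> ev" and m: "m \<in> ev"
    have lm: "l - m \<in> bohr ev" unfolding bohr_def using l m by blast
    have fb: "finite (bohr ev)" unfolding bohr_def
    proof -
      have "{l - l' |l l'. l \<in> ev \<and> l' \<in> ev} = (\<lambda>(a,b). a - b) ` (ev \<times> ev)" by auto
      then show "finite {l - l' |l l'. l \<in> ev \<and> l' \<in> ev}" using ev by simp
    qed
    have "(\<Sum>\<omega>1\<in>bohr ev. if l - m = \<omega>1 \<and> m - l' = \<omega> - \<omega>1 then gmul D (blk l m Q1) (blk m l' Q2) x y else 0)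
        = (\<Sum>\<omega>1\<in>bohr ev. if l - m = \<omega>1 then (if m - l' = \<omega> - (l - m) then gmul D (blk l m Q1) (blk m l' Q2) x y else 0) else 0)"
      by (rule sum.cong) auto
    also have "\<dots> = (if m - l' = \<omega> - (l - m) then gmul D (blk l m Q1) (blk m l' Q2) x y else 0)"
      using lm fb by simp
    also have "\<dots> = (if l - l' = \<omega> then gmul D (blk l m Q1) (blk m l' Q2) x y else 0)"
      by (rule if_cong) auto
    finally show "(\<Sum>\<omega>1\<in>bohr ev. if l - m = \<omega>1 \<and> m - l' = \<omega> - \<omega>1 then gmul D (blk l m Q1) (blk m l' Q2) x y else 0)
        = (if l - l' = \<omega> then gmul D (blk l m Q1) (blk m l' Q2) x y else 0)" .
  qed
  also have "\<dots> = (\<Sum>l\<in>ev. \<Sum>l'\<in>ev. if l - l' = \<omega> then (\<Sum>m\<in>ev. gmul D (blk l m Q1) (blk m l' Q2) x y) else 0)"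
    by (rule sum.cong, simp, subst sum.swap, rule sum.cong, simp, simp)
  also have "\<dots> = gfreq D ev P (gmul D Q1 Q2) \<omega> x y"
    unfolding gfreq_def
  proof (rule sum.cong, simp, rule sum.cong, simp)
    fix l l' assume l: "l \<in> ev" and l': "l' \<in> ev"
    have e: "(\<Sum>m\<in>ev. gmul D (blk l m Q1) (blk m l' Q2) x y) = blk l l' (gmul D Q1 Q2) x y"
      using fun_cong[OF fun_cong[OF blk_mul[OF Q1 l l', of Q2]], of x y] by simp
    show "(if l - l' = \<omega> then (\<Sum>m\<in>ev. gmul D (blk l m Q1) (blk m l' Q2) x y) else 0)
        = (if l - l' = \<omega> then gmul D (gmul D (P l) (gmul D Q1 Q2)) (P l') x y else 0)"
      by (simp only: e, simp only: blk_def)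
  qed
  finally show "gfreq D ev P (gmul D Q1 Q2) \<omega> x y = (\<Sum>\<omega>1\<in>bohr ev. gmul D (gfreq D ev P Q1 \<omega>1) (gfreq D ev P Q2 (\<omega> - \<omega>1)) x y)" by simp
qed


lemma gfreq_gops: "gops D (gfreq D ev P Q \<omega>)"
  unfolding gops_def gfreq_def
proof (intro allI impI)
  fix x y assume xy: "x \<notin> D \<or> y \<notin> D"
  show "(\<Sum>l\<in>ev. \<Sum>l'\<in>ev. if l - l' = \<omega> then gmul D (gmul D (P l) Q) (P l') x y else 0) = 0"
  proof (intro sum.neutral ballI)
    fix l l' assume "l \<in> ev" "l' \<in> ev"
    then have "gops D (P l)" "gops D (P l')" using Pops by auto
    then show "(if l - l' = \<omega> then gmul D (gmul D (P l) Q) (P l') x y else 0) = 0"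
      using xy unfolding gops_def gmul_def by auto
  qed
qed

lemma gfreq_adj: "gadj (gfreq D ev P Q \<omega>) = gfreq D ev P (gadj Q) (- \<omega>)"
proof (intro ext)
  fix x y
  have "gadj (gfreq D ev P Q \<omega>) x y = (\<Sum>l\<in>ev. \<Sum>l'\<in>ev. if l - l' = \<omega> then gmul D (gmul D (P l') (gadj Q)) (P l) x y else 0)"
  proof -
    have "gadj (gfreq D ev P Q \<omega>) x y = (\<Sum>l\<in>ev. \<Sum>l'\<in>ev. if l - l' = \<omega> then gadj (gmul D (gmul D (P l) Q) (P l')) x y else 0)"
      unfolding gfreq_def by (simp add: gadj_def cnj_sum if_distrib cong: if_cong)
    also have "\<dots> = (\<Sum>l\<in>ev. \<Sum>l'\<in>ev. if l - l' = \<omega> then gmul D (gmul D (P l') (gadj Q)) (P l) x y else 0)"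
      by (rule sum.cong, simp, rule sum.cong, simp) (use Padj in \<open>simp add: gadj_gmul gmul_assoc\<close>)
    finally show ?thesis .
  qed
  also have "\<dots> = (\<Sum>l'\<in>ev. \<Sum>l\<in>ev. if l - l' = \<omega> then gmul D (gmul D (P l') (gadj Q)) (P l) x y else 0)"
    by (rule sum.swap)
  also have "\<dots> = gfreq D ev P (gadj Q) (- \<omega>) x y"
    unfolding gfreq_def by (rule sum.cong, simp, rule sum.cong, simp, rule if_cong) auto
  finally show "gadj (gfreq D ev P Q \<omega>) x y = gfreq D ev P (gadj Q) (- \<omega>) x y" .
qed

lemma gfreq_lin: "gfreq D ev P (\<lambda>x y. a * Q1 x y + b * Q2 x y) \<omega>
    = (\<lambda>x y. a * gfreq D ev P Q1 \<omega> x y + b * gfreq D ev P Q2 \<omega> x y)"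
  unfolding gfreq_def gmul_lin_left gmul_lin_right
  by (intro ext, simp only: sum_distrib_left sum.distrib[symmetric], rule sum.cong, simp, rule sum.cong, simp, simp)

lemma gfreq_nonbohr: "\<omega> \<notin> bohr ev \<Longrightarrow> gfreq D ev P Q \<omega> = (\<lambda>x y. 0)"
  unfolding gfreq_def bohr_def by (intro ext sum.neutral ballI) auto

lemma gfreq_gid: "gfreq D ev P (gid D) \<omega> = (if \<omega> = 0 then gid D else (\<lambda>x y. 0))"
proof -
  have pp: "gmul D (gmul D (P l) (gid D)) (P l') = (if l = l' then P l else (\<lambda>x y. 0))"
    if "l \<in> ev" "l' \<in> ev" for l l'
  proof -
    have "gmul D (P l) (gid D) = P l" using Pops that by (intro gmul_gid_right[OF _ D]) (auto simp: gops_def)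
    then show ?thesis using Pidem Porth that by auto
  qed
  show ?thesis
  proof (cases "\<omega> = 0")
    case True
    have "gfreq D ev P (gid D) \<omega> = (\<lambda>x y. \<Sum>l\<in>ev. \<Sum>l'\<in>ev. if l' = l then P l x y else 0)"
      unfolding gfreq_def using True pp by (intro ext sum.cong refl) auto
    also have "\<dots> = (\<lambda>x y. \<Sum>l\<in>ev. P l x y)" using ev by simp
    finally show ?thesis using True Psum by simp
  next
    case False
    have "gfreq D ev P (gid D) \<omega> = (\<lambda>x y. 0)"
      unfolding gfreq_def using False pp by (intro ext sum.neutral ballI) auto
    then show ?thesis using False by simp
  qed
qed

definition galg :: "('a \<Rightarrow> 'a \<Rightarrow> complex) set \<Rightarrow> ('a \<Rightarrow> 'a \<Rightarrow> complex) set" where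
  "galg Xs = {Q. gops D Q \<and> (\<forall>\<omega>. \<forall>Z\<in>Xs. gmul D Z (gfreq D ev P Q \<omega>) = gmul D (gfreq D ev P Q \<omega>) Z)}"

lemma galg_lin:
  assumes "Q1 \<in> galg Xs" "Q2 \<in> galg Xs"
  shows "(\<lambda>x y. a * Q1 x y + b * Q2 x y) \<in> galg Xs"
proof -
  have g: "gops D (\<lambda>x y. a * Q1 x y + b * Q2 x y)" using assms unfolding galg_def gops_def by auto
  have "gmul D Z (gfreq D ev P (\<lambda>x y. a * Q1 x y + b * Q2 x y) \<omega>)
      = gmul D (gfreq D ev P (\<lambda>x y. a * Q1 x y + b * Q2 x y) \<omega>) Z" if Z: "Z \<in> Xs" for Z \<omega>
  proof -
    have c1: "gmul D Z (gfreq D ev P Q1 \<omega>) = gmul D (gfreq D ev P Q1 \<omega>) Z" using assms(1) Z unfolding galg_def by auto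
    have c2: "gmul D Z (gfreq D ev P Q2 \<omega>) = gmul D (gfreq D ev P Q2 \<omega>) Z" using assms(2) Z unfolding galg_def by auto
    show ?thesis unfolding gfreq_lin gmul_lin_left gmul_lin_right c1 c2 ..
  qed
  then show ?thesis using g unfolding galg_def by blast
qed

lemma galg_zero: "(\<lambda>x y. 0) \<in> galg Xs"
proof -
  have "gfreq D ev P (\<lambda>x y. 0) \<omega> = (\<lambda>x y. 0)" for \<omega>
    unfolding gfreq_def gmul_zero_right gmul_zero_left by simp
  then show ?thesis unfolding galg_def gops_def by (simp add: gmul_zero_left gmul_zero_right)
qed

lemma galg_gid: assumes Xs: "\<forall>Z\<in>Xs. gops D Z" shows "gid D \<in> galg Xs"
proof -
  have g: "gops D (gid D)" unfolding gops_def gid_def by auto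
  have "gmul D Z (gfreq D ev P (gid D) \<omega>) = gmul D (gfreq D ev P (gid D) \<omega>) Z" if Z: "Z \<in> Xs" for Z \<omega>
  proof (cases "\<omega> = 0")
    case True
    have "gmul D Z (gid D) = Z" by (rule gmul_gid_right[OF gops_csupp[OF Xs[rule_format, OF Z]] D])
    moreover have "gmul D (gid D) Z = Z" by (rule gmul_gid_left[OF gops_rsupp[OF Xs[rule_format, OF Z]] D])
    ultimately show ?thesis unfolding gfreq_gid using True by simp
  next
    case False
    then show ?thesis unfolding gfreq_gid by (simp add: gmul_zero_left gmul_zero_right)
  qed
  then show ?thesis using g unfolding galg_def by blast
qed

lemma galg_mul:
  assumes Q1: "Q1 \<in> galg Xs" and Q2: "Q2 \<in> galg Xs"
  shows "gmul D Q1 Q2 \<in> galg Xs"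
  unfolding galg_def
proof (intro CollectI conjI allI ballI)
  show "gops D (gmul D Q1 Q2)" using Q1 Q2 unfolding galg_def by (auto intro: gops_gmul)
  fix \<omega> Z assume Z: "Z \<in> Xs"
  have c1: "\<forall>\<omega>. gmul D Z (gfreq D ev P Q1 \<omega>) = gmul D (gfreq D ev P Q1 \<omega>) Z" using Q1 Z unfolding galg_def by auto
  have c2: "\<forall>\<omega>. gmul D Z (gfreq D ev P Q2 \<omega>) = gmul D (gfreq D ev P Q2 \<omega>) Z" using Q2 Z unfolding galg_def by auto
  have Q1c: "\<forall>x y. y \<notin> D \<longrightarrow> Q1 x y = 0" using Q1 unfolding galg_def gops_def by auto
  have "gmul D Z (gmul D (gfreq D ev P Q1 \<omega>1) (gfreq D ev P Q2 (\<omega> - \<omega>1)))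
      = gmul D (gmul D (gfreq D ev P Q1 \<omega>1) (gfreq D ev P Q2 (\<omega> - \<omega>1))) Z" for \<omega>1
    by (metis c1 c2 gmul_assoc)
  then show "gmul D Z (gfreq D ev P (gmul D Q1 Q2) \<omega>) = gmul D (gfreq D ev P (gmul D Q1 Q2) \<omega>) Z"
    unfolding gfreq_mul[OF Q1c] gmul_sum_right1 gmul_sum_left1 by simp
qed

lemma galg_adj:
  assumes Q: "Q \<in> galg Xs" and Xs: "\<forall>Z\<in>Xs. gadj Z \<in> Xs"
  shows "gadj Q \<in> galg Xs"
  unfolding galg_def
proof (intro CollectI conjI allI ballI)
  show "gops D (gadj Q)" using Q unfolding galg_def by (auto intro: gops_gadj)
  fix \<omega> Z assume Z: "Z \<in> Xs"
  have c: "gmul D (gadj Z) (gfreq D ev P Q (- \<omega>)) = gmul D (gfreq D ev P Q (- \<omega>)) (gadj Z)"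
    using Q Xs Z unfolding galg_def by auto
  have "gmul D Z (gfreq D ev P (gadj Q) \<omega>) = gadj (gmul D (gfreq D ev P Q (- \<omega>)) (gadj Z))"
    using gfreq_adj[of Q "- \<omega>"] by (simp add: gadj_gmul)
  also have "\<dots> = gadj (gmul D (gadj Z) (gfreq D ev P Q (- \<omega>)))" using c by simp
  also have "\<dots> = gmul D (gfreq D ev P (gadj Q) \<omega>) Z"
    using gfreq_adj[of Q "- \<omega>"] by (simp add: gadj_gmul)
  finally show "gmul D Z (gfreq D ev P (gadj Q) \<omega>) = gmul D (gfreq D ev P (gadj Q) \<omega>) Z" .
qed

lemma galg_sum:
  assumes "finite K" "\<forall>k\<in>K. F k \<in> galg Xs"
  shows "(\<lambda>x y. \<Sum>k\<in>K. f k * F k x y) \<in> galg Xs"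
proof (rule M_sum[OF galg_zero _ _ assms])
  show "\<forall>u\<in>galg Xs. \<forall>v\<in>galg Xs. (\<lambda>x y. u x y + v x y) \<in> galg Xs"
    using galg_lin[where a = 1 and b = 1] by simp
  show "\<forall>c. \<forall>u\<in>galg Xs. (\<lambda>x y. c * u x y) \<in> galg Xs"
    using galg_lin[where b = 0] galg_zero by fastforce
qed

end




lemma conf_insert: "conf (insert e V) \<subseteq> (\<lambda>(g, \<sigma>). \<sigma>(e := g)) ` (UNIV \<times> conf V)"
proof
  fix \<sigma> :: "edge \<Rightarrow> 'g::zero" assume s: "\<sigma> \<in> conf (insert e V)"
  have "\<sigma>(e := 0) \<in> conf V" using s unfolding conf_def by auto
  moreover have "\<sigma> = (\<sigma>(e := 0))(e := \<sigma> e)" by simp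
  ultimately show "\<sigma> \<in> (\<lambda>(g, \<sigma>). \<sigma>(e := g)) ` (UNIV \<times> conf V)"
    by (intro image_eqI[where x = "(\<sigma> e, \<sigma>(e := 0))"]) auto
qed

lemma finite_conf: "finite V \<Longrightarrow> finite (conf V :: (edge \<Rightarrow> 'g::{zero,finite}) set)"
proof (induction V rule: finite_induct)
  case empty
  have "conf {} = {(\<lambda>e. 0) :: edge \<Rightarrow> 'g}" unfolding conf_def by auto
  then show ?case by simp
next
  case (insert e V)
  have "finite ((\<lambda>(g, \<sigma>). \<sigma>(e := g)) ` (UNIV \<times> (conf V :: (edge \<Rightarrow> 'g) set)))"
    using insert by simp
  then show ?case using conf_insert finite_subset by blast
qed

lemma opmul_gmul: "opmul L = gmul (conf L)"
  unfolding opmul_def gmul_def by (intro ext) simp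
lemma adj_gadj: "adj = gadj"
  unfolding adj_def gadj_def by (intro ext) simp
lemma idop_gid: "idop L = gid (conf L)"
  unfolding idop_def gid_def by (intro ext) auto
lemma ops_gops: "A \<in> ops L \<longleftrightarrow> gops (conf L) A"
  unfolding ops_def gops_def by simp
lemma freq_gfreq: "freq L ev P Q \<omega> = gfreq (conf L) ev P Q \<omega>"
  unfolding freq_def gfreq_def opmul_gmul ..

lemma embed_ops: "embed L V a \<in> ops L"
  unfolding embed_def ops_def by auto

lemma embed_adj: "adj (embed L V a) = embed L V (adj a)"
  unfolding embed_def adj_def by (intro ext) auto

lemma embed_lin: "embed L V (\<lambda>x y. c * a x y + d * b x y) = (\<lambda>x y. c * embed L V a x y + d * embed L V b x y)"
  unfolding embed_def by (intro ext) auto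

lemma restr_conf: "restr x V \<in> conf V"
  unfolding restr_def conf_def by auto

lemma embed_id:
  assumes "V \<subseteq> L"
  shows "embed L V (idop V) = idop L"
proof (intro ext)
  fix x y :: "edge \<Rightarrow> 'g::zero"
  show "embed L V (idop V) x y = idop L x y"
  proof (cases "x \<in> conf L \<and> y \<in> conf L \<and> (\<forall>e\<in>L - V. x e = y e)")
    case True
    have "restr x V = restr y V \<longleftrightarrow> x = y"
    proof
      assume r: "restr x V = restr y V"
      show "x = y"
      proof
        fix e
        show "x e = y e"
        proof (cases "e \<in> V")
          case True then show ?thesis using fun_cong[OF r, of e] unfolding restr_def by simp
        next
          case False
          show ?thesis
          proof (cases "e \<in> L")
            case True then show ?thesis using \<open>e \<notin> V\<close> \<open>x \<in> conf L \<and> y \<in> conf L \<and> (\<forall>e\<in>L - V. x e = y e)\<close> by auto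
          next
            case False
            have "x \<in> conf L" "y \<in> conf L" using \<open>x \<in> conf L \<and> y \<in> conf L \<and> (\<forall>e\<in>L - V. x e = y e)\<close> by auto
            then have "x e = 0" "y e = 0" using False unfolding conf_def by blast+
            then show ?thesis by simp
          qed
        qed
      qed
    qed simp
    then show ?thesis using True restr_conf[of x V] unfolding embed_def idop_def by auto
  next
    case False
    then show ?thesis unfolding embed_def idop_def by auto
  qed
qed

lemma embed_embed:
  fixes s :: "('g::zero) op"
  assumes e: "e \<in> R" and R: "R \<subseteq> L"
  shows "embed L R (embed R {e} s) = embed L {e} s"
proof (intro ext)
  fix x y :: "edge \<Rightarrow> 'g::zero"
  have rr: "restr (restr x R) {e} = restr x {e}" for x :: "edge \<Rightarrow> 'g"
    unfolding restr_def using e by auto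
  have c: "((\<forall>f\<in>L - R. x f = y f) \<and> (\<forall>f\<in>R - {e}. restr x R f = restr y R f)) \<longleftrightarrow> (\<forall>f\<in>L - {e}. x f = y f)"
  proof (intro iffI ballI conjI)
    fix f assume A: "(\<forall>f\<in>L - R. x f = y f) \<and> (\<forall>f\<in>R - {e}. restr x R f = restr y R f)" and f: "f \<in> L - {e}"
    show "x f = y f"
    proof (cases "f \<in> R")
      case True then have "restr x R f = restr y R f" using A f by blast
      then show ?thesis using True unfolding restr_def by simp
    next
      case False then show ?thesis using A f by blast
    qed
  next
    fix f assume C: "\<forall>f\<in>L - {e}. x f = y f" and f: "f \<in> L - R"
    then have "f \<noteq> e" using e by blast
    then show "x f = y f" using C f by blast
  next
    fix f assume C: "\<forall>f\<in>L - {e}. x f = y f" and f: "f \<in> R - {e}"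
    then have "f \<in> L - {e}" using R by blast
    then show "restr x R f = restr y R f" using C f unfolding restr_def by simp
  qed
  show "embed L R (embed R {e} s) x y = embed L {e} s x y"
    unfolding embed_def using restr_conf[of x R] restr_conf[of y R] c rr by auto
qed

lemma embed_mul:
  fixes a b :: "('g::{zero,finite}) op"
  assumes V: "V \<subseteq> L" and L: "finite L"
  shows "embed L V (opmul V a b) = opmul L (embed L V a) (embed L V b)"
proof (intro ext)
  fix x y :: "edge \<Rightarrow> 'g::{zero,finite}"
  show "embed L V (opmul V a b) x y = opmul L (embed L V a) (embed L V b) x y"
  proof (cases "x \<in> conf L \<and> y \<in> conf L \<and> (\<forall>e\<in>L - V. x e = y e)")
    case False
    have pz: "embed L V a x z * embed L V b z y = 0" for z :: "edge \<Rightarrow> 'g"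
      using False unfolding embed_def by auto
    have "opmul L (embed L V a) (embed L V b) x y = 0"
      unfolding opmul_def by (intro sum.neutral ballI) (rule pz)
    moreover have "embed L V (opmul V a b) x y = 0" using False unfolding embed_def by (simp only: if_False)
    ultimately show ?thesis by simp
  next
    case True
    then have x: "x \<in> conf L" and y: "y \<in> conf L" and xy: "\<forall>e\<in>L - V. x e = y e" by auto
    define Zx where "Zx = {z \<in> conf L. \<forall>e\<in>L - V. z e = x e}"
    have fZ: "finite (conf L :: (edge \<Rightarrow> 'g) set)" using finite_conf[OF L] .
    have "opmul L (embed L V a) (embed L V b) x y
        = (\<Sum>z\<in>conf L. if z \<in> Zx then a (restr x V) (restr z V) * b (restr z V) (restr y V) else 0)"
      unfolding opmul_def
    proof (rule sum.cong, simp)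
      fix z :: "edge \<Rightarrow> 'g" assume z: "z \<in> conf L"
      show "embed L V a x z * embed L V b z y = (if z \<in> Zx then a (restr x V) (restr z V) * b (restr z V) (restr y V) else 0)"
        unfolding embed_def Zx_def using x y z xy by auto
    qed
    also have "\<dots> = (\<Sum>z\<in>Zx. a (restr x V) (restr z V) * b (restr z V) (restr y V))"
    proof -
      have "(\<Sum>z\<in>conf L. if z \<in> Zx then a (restr x V) (restr z V) * b (restr z V) (restr y V) else 0)
          = (\<Sum>z\<in>conf L. if (\<forall>e\<in>L - V. z e = x e) then a (restr x V) (restr z V) * b (restr z V) (restr y V) else 0)"
        unfolding Zx_def by (rule sum.cong) auto
      also have "\<dots> = (\<Sum>z\<in>Zx. a (restr x V) (restr z V) * b (restr z V) (restr y V))"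
        unfolding Zx_def by (rule sum.inter_filter[symmetric, OF fZ])
      finally show ?thesis .
    qed
    also have "\<dots> = (\<Sum>w\<in>conf V. a (restr x V) w * b w (restr y V))"
    proof (rule sum.reindex_bij_witness[where j = "\<lambda>z. restr z V" and i = "\<lambda>w. (\<lambda>e. if e \<in> V then w e else x e)"])
      fix z :: "edge \<Rightarrow> 'g" assume z: "z \<in> Zx"
      show "(\<lambda>e. if e \<in> V then restr z V e else x e) = z"
      proof
        fix e show "(if e \<in> V then restr z V e else x e) = z e"
        proof (cases "e \<in> V")
          case False
          show ?thesis
          proof (cases "e \<in> L")
            case True then show ?thesis using z False unfolding Zx_def by auto
          next
            case False
            have "z \<in> conf L" using z unfolding Zx_def by blast
            then have "x e = 0" "z e = 0" using x False unfolding conf_def by blast+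
            then show ?thesis using \<open>e \<notin> V\<close> by simp
          qed
        qed (simp add: restr_def)
      qed
      show "restr z V \<in> conf V" by (rule restr_conf)
    next
      fix w :: "edge \<Rightarrow> 'g" assume w: "w \<in> conf V"
      show "restr (\<lambda>e. if e \<in> V then w e else x e) V = w"
        using w unfolding restr_def conf_def by auto
      show "(\<lambda>e. if e \<in> V then w e else x e) \<in> Zx"
        using w x V unfolding Zx_def conf_def by auto
    qed simp
    also have "\<dots> = embed L V (opmul V a b) x y"
      unfolding embed_def opmul_def using True by simp
    finally show ?thesis by simp
  qed
qed


definition upd0 :: "edge \<Rightarrow> 'g \<Rightarrow> edge \<Rightarrow> 'g::zero" where
  "upd0 e g = (\<lambda>_. 0)(e := g)"

lemma restr_single: "restr x {e} = upd0 e g \<longleftrightarrow> x e = g"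
proof
  assume "restr x {e} = upd0 e g"
  from fun_cong[OF this, of e] show "x e = g" unfolding restr_def upd0_def by simp
next
  assume "x e = g"
  then show "restr x {e} = upd0 e g" unfolding restr_def upd0_def by (intro ext) auto
qed

lemma embed_unit:
  fixes x z :: "edge \<Rightarrow> 'g::zero"
  assumes x: "x \<in> conf L" and z: "z \<in> conf L" and e: "e \<in> L"
  shows "embed L {e} (munit (upd0 e g) (upd0 e g')) x z = (if z = x(e := g') \<and> x e = g then 1 else 0)"
proof -
  have "((\<forall>f\<in>L - {e}. x f = z f) \<and> x e = g \<and> z e = g') \<longleftrightarrow> (z = x(e := g') \<and> x e = g)"
  proof
    assume A: "(\<forall>f\<in>L - {e}. x f = z f) \<and> x e = g \<and> z e = g'"
    have "z f = (x(e := g')) f" for f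
    proof (cases "f = e")
      case True then show ?thesis using A by simp
    next
      case False
      show ?thesis
      proof (cases "f \<in> L")
        case True then show ?thesis using A False by simp
      next
        case fL: False
        have "x f = 0" "z f = 0" using x z fL unfolding conf_def by blast+
        then show ?thesis using False by simp
      qed
    qed
    then show "z = x(e := g') \<and> x e = g" using A by auto
  next
    assume "z = x(e := g') \<and> x e = g"
    then show "(\<forall>f\<in>L - {e}. x f = z f) \<and> x e = g \<and> z e = g'" by auto
  qed
  then show ?thesis unfolding embed_def munit_def restr_single using x z by auto
qed

lemma conf_upd: "x \<in> conf L \<Longrightarrow> e \<in> L \<Longrightarrow> x(e := g) \<in> conf L"
  unfolding conf_def by auto

lemma sum_unit:
  fixes W :: "(edge \<Rightarrow> 'g::{zero,finite}) \<Rightarrow> complex"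
  assumes x: "x \<in> conf L" and e: "e \<in> L" and L: "finite L"
  shows "(\<Sum>z\<in>conf L. embed L {e} (munit (upd0 e g) (upd0 e g')) x z * W z) = (if x e = g then W (x(e := g')) else 0)"
proof -
  have "(\<Sum>z\<in>conf L. embed L {e} (munit (upd0 e g) (upd0 e g')) x z * W z)
      = (\<Sum>z\<in>conf L. if z = x(e := g') then (if x e = g then W z else 0) else 0)"
    by (rule sum.cong, simp) (simp add: embed_unit[OF x _ e])
  also have "\<dots> = (if x(e := g') \<in> conf L then (if x e = g then W (x(e := g')) else 0) else 0)"
    by (rule sum.delta[OF finite_conf[OF L]])
  also have "\<dots> = (if x e = g then W (x(e := g')) else 0)"
    using conf_upd[OF x e] by (simp only: if_True)
  finally show ?thesis .
qed

lemma embed_empty: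
  fixes Q :: "('g::zero) op"
  shows "embed L {} Q = (\<lambda>x y. Q (\<lambda>_. 0) (\<lambda>_. 0) * idop L x y)"
proof (intro ext)
  fix x y :: "edge \<Rightarrow> 'g"
  have r: "restr z {} = (\<lambda>_. 0)" for z :: "edge \<Rightarrow> 'g" unfolding restr_def by simp
  have "(x \<in> conf L \<and> y \<in> conf L \<and> (\<forall>f\<in>L - {}. x f = y f)) \<longleftrightarrow> (x = y \<and> x \<in> conf L)"
  proof
    assume A: "x \<in> conf L \<and> y \<in> conf L \<and> (\<forall>f\<in>L - {}. x f = y f)"
    have "x f = y f" for f
    proof (cases "f \<in> L")
      case False
      then have "x f = 0" "y f = 0" using A unfolding conf_def by blast+
      then show ?thesis by simp
    qed (use A in auto)
    then show "x = y \<and> x \<in> conf L" using A by auto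
  qed auto
  then show "embed L {} Q x y = Q (\<lambda>_. 0) (\<lambda>_. 0) * idop L x y"
    unfolding embed_def idop_def r by auto
qed

lemma embed_split:
  fixes Q :: "('g::{zero,finite}) op"
  assumes e: "e \<notin> R" and RL: "insert e R \<subseteq> L" and L: "finite L"
  shows "embed L (insert e R) Q = (\<lambda>x y. \<Sum>g\<in>UNIV. \<Sum>g'\<in>UNIV.
      opmul L (embed L {e} (munit (upd0 e g) (upd0 e g'))) (embed L R (\<lambda>a b. Q (a(e := g)) (b(e := g')))) x y)"
proof (intro ext)
  fix x y :: "edge \<Rightarrow> 'g"
  have eL: "e \<in> L" using RL by simp
  show "embed L (insert e R) Q x y = (\<Sum>g\<in>UNIV. \<Sum>g'\<in>UNIV.
      opmul L (embed L {e} (munit (upd0 e g) (upd0 e g'))) (embed L R (\<lambda>a b. Q (a(e := g)) (b(e := g')))) x y)"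
  proof (cases "x \<in> conf L")
    case False
    then show ?thesis unfolding embed_def opmul_def by simp
  next
    case x: True
    let ?Qs = "\<lambda>g g'. (\<lambda>a b. Q (a(e := g)) (b(e := g')))"
    have "(\<Sum>g\<in>UNIV. \<Sum>g'\<in>UNIV. opmul L (embed L {e} (munit (upd0 e g) (upd0 e g'))) (embed L R (?Qs g g')) x y)
        = (\<Sum>g\<in>UNIV. \<Sum>g'\<in>UNIV. if x e = g then embed L R (?Qs g g') (x(e := g')) y else 0)"
      unfolding opmul_def by (intro sum.cong refl) (rule sum_unit[OF x eL L])
    also have "\<dots> = (\<Sum>g'\<in>UNIV. embed L R (?Qs (x e) g') (x(e := g')) y)"
    proof -
      have "(\<Sum>g\<in>UNIV. \<Sum>g'\<in>UNIV. if x e = g then embed L R (?Qs g g') (x(e := g')) y else 0)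
          = (\<Sum>g\<in>UNIV. if x e = g then (\<Sum>g'\<in>UNIV. embed L R (?Qs g g') (x(e := g')) y) else 0)"
        by (rule sum.cong) auto
      then show ?thesis by simp
    qed
    also have "\<dots> = (\<Sum>g'\<in>UNIV. if g' = y e then embed L R (?Qs (x e) g') (x(e := g')) y else 0)"
    proof (rule sum.cong, simp)
      fix g' assume "g' \<in> (UNIV :: 'g set)"
      show "embed L R (?Qs (x e) g') (x(e := g')) y = (if g' = y e then embed L R (?Qs (x e) g') (x(e := g')) y else 0)"
      proof (cases "g' = y e")
        case False
        then have "(x(e := g')) e \<noteq> y e" by simp
        moreover have "e \<in> L - R" using eL e by simp
        ultimately show ?thesis using False unfolding embed_def by auto
      qed simp
    qed
    also have "\<dots> = embed L R (?Qs (x e) (y e)) (x(e := y e)) y" by simp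
    also have "\<dots> = embed L (insert e R) Q x y"
    proof -
      have c: "(\<forall>f\<in>L - R. (x(e := y e)) f = y f) \<longleftrightarrow> (\<forall>f\<in>L - insert e R. x f = y f)"
        using eL e by auto
      have r1: "(restr (x(e := y e)) R)(e := x e) = restr x (insert e R)"
        unfolding restr_def using e by (intro ext) auto
      have r2: "(restr y R)(e := y e) = restr y (insert e R)"
        unfolding restr_def using e by (intro ext) auto
      show ?thesis unfolding embed_def using c r1 r2 conf_upd[OF x eL] x by auto
    qed
    finally show ?thesis by simp
  qed
qed




lemma finite_torus_edges: "finite (torus_edges N)"
proof -
  have "torus_edges N \<subseteq> {..<N} \<times> {..<N} \<times> (UNIV :: bool set)"
    unfolding torus_edges_def by auto
  then show ?thesis by (rule finite_subset) simp
qed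

lemma finite_bohr: "finite ev \<Longrightarrow> finite (bohr ev)"
proof -
  assume "finite ev"
  have "bohr ev = (\<lambda>(a,b). a - b) ` (ev \<times> ev)" unfolding bohr_def by auto
  then show ?thesis using \<open>finite ev\<close> by simp
qed

lemma bohr_uminus: "\<omega> \<in> bohr ev \<Longrightarrow> - \<omega> \<in> bohr ev"
  unfolding bohr_def by force

theorem mainTheorem7:
  fixes N :: nat and \<Lambda> R :: "edge set" and \<beta> :: real
    and ev :: "real set" and P :: "real \<Rightarrow> ('g::{ab_group_add,finite}) op"
    and I :: "'i set" and S :: "edge \<Rightarrow> 'i \<Rightarrow> 'g op"
    and h :: "edge \<Rightarrow> 'i \<Rightarrow> real \<Rightarrow> real"
  assumes \<Lambda>: "\<Lambda> \<subseteq> torus_edges N"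
    and R: "R \<subseteq> \<Lambda>"
    and \<beta>: "0 \<le> \<beta>"
    and spec: "spectral_decomp \<Lambda> (qd_ham N \<Lambda>) ev P"
    and I: "finite I"
    and S_ops: "\<forall>e\<in>\<Lambda>. \<forall>i\<in>I. S e i \<in> ops {e}"
    and S_adj: "\<forall>e\<in>\<Lambda>. \<forall>i\<in>I. \<exists>j\<in>I. S e j = adj (S e i)"
    and S_comm: "\<forall>e\<in>\<Lambda>. \<forall>X\<in>ops {e}. (\<forall>i\<in>I. opmul {e} X (S e i) = opmul {e} (S e i) X)
                   \<longrightarrow> (\<exists>c. X = (\<lambda>x y. c * idop {e} x y))"
    and h_pos: "\<forall>e\<in>\<Lambda>. \<forall>i\<in>I. \<forall>\<omega>\<in>bohr ev. h e i \<omega> > 0"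
    and h_db: "\<forall>e\<in>\<Lambda>. \<forall>i\<in>I. \<forall>\<omega>\<in>bohr ev. h e i (- \<omega>) = h e i \<omega> * exp (- \<beta> * \<omega>)"
  shows "op_kernel \<Lambda> (lindblad \<Lambda> ev P I S h R)
           = commutant \<Lambda> {freq \<Lambda> ev P (embed \<Lambda> {e} (S e i)) \<omega> | e i \<omega>. e \<in> R \<and> i \<in> I \<and> \<omega> \<in> bohr ev}
       \<and> commutant \<Lambda> {freq \<Lambda> ev P (embed \<Lambda> {e} (S e i)) \<omega> | e i \<omega>. e \<in> R \<and> i \<in> I \<and> \<omega> \<in> bohr ev}
           = commutant \<Lambda> {freq \<Lambda> ev P Q \<omega> | Q \<omega>. Q \<in> local_ops \<Lambda> R \<and> \<omega> \<in> bohr ev}"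
proof -
  let ?D = "conf \<Lambda> :: (edge \<Rightarrow> 'g) set"
  have finL: "finite \<Lambda>" using \<Lambda> finite_torus_edges finite_subset by blast
  have finR: "finite R" using R finL finite_subset by blast
  have finD: "finite ?D" by (rule finite_conf[OF finL])
  have sd: "finite ev" "\<forall>l\<in>ev. P l \<in> ops \<Lambda> \<and> adj (P l) = P l \<and> opmul \<Lambda> (P l) (P l) = P l"
     "\<forall>l\<in>ev. \<forall>m\<in>ev. l \<noteq> m \<longrightarrow> opmul \<Lambda> (P l) (P m) = (\<lambda>x y. 0)"
     "(\<lambda>x y. \<Sum>l\<in>ev. P l x y) = idop \<Lambda>"
    using spec unfolding spectral_decomp_def by auto
  interpret sp: specd ?D ev P
    using sd finD unfolding opmul_gmul adj_gadj idop_gid ops_gops by unfold_locales auto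
  have finB: "finite (bohr ev)" by (rule finite_bohr[OF sd(1)])
  define K where "K = R \<times> I \<times> bohr ev"
  define T where "T = (\<lambda>(e, i, \<omega>). freq \<Lambda> ev P (embed \<Lambda> {e} (S e i)) \<omega>)"
  define c where "c = (\<lambda>(e, i, \<omega>). h e i \<omega>)"
  have finK: "finite K" unfolding K_def using finR I finB by simp
  have C1eq: "{freq \<Lambda> ev P (embed \<Lambda> {e} (S e i)) \<omega> | e i \<omega>. e \<in> R \<and> i \<in> I \<and> \<omega> \<in> bohr ev} = T ` K"
    unfolding K_def T_def by force
  have lind: "lindblad \<Lambda> ev P I S h R X = gLind ?D K T c X" for X
  proof (intro ext)
    fix x y
    have "lindblad \<Lambda> ev P I S h R X x y = (\<Sum>e\<in>R. \<Sum>i\<in>I. \<Sum>\<omega>\<in>bohr ev.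
        (\<lambda>(e, i, \<omega>). complex_of_real (c (e, i, \<omega>)) *
          (gmul ?D (gmul ?D (gadj (T (e, i, \<omega>))) X) (T (e, i, \<omega>)) x y
           - (gmul ?D (gmul ?D (gadj (T (e, i, \<omega>))) (T (e, i, \<omega>))) X x y
              + gmul ?D X (gmul ?D (gadj (T (e, i, \<omega>))) (T (e, i, \<omega>))) x y) / 2)) (e, i, \<omega>))"
      unfolding lindblad_def dissip_def Let_def opmul_gmul adj_gadj T_def c_def by simp
    also have "\<dots> = gLind ?D K T c X x y"
      unfolding gLind_def K_def sum.cartesian_product by (simp add: case_prod_beta)
    finally show "lindblad \<Lambda> ev P I S h R X x y = gLind ?D K T c X x y" .
  qed
  have Tops: "\<forall>k\<in>K. gops ?D (T k)" unfolding T_def freq_gfreq using sp.gfreq_gops by auto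
  have cpos: "\<forall>k\<in>K. c k > 0" unfolding K_def c_def using h_pos R by auto
  have Tadj: "T (e, j, - \<omega>) = gadj (T (e, i, \<omega>))" if "S e j = adj (S e i)" for e i j \<omega>
    unfolding T_def freq_gfreq using that embed_adj[of \<Lambda> "{e}" "S e i"] by (simp add: sp.gfreq_adj adj_gadj)
  have adjc: "\<forall>k\<in>K. \<exists>k'\<in>K. T k' = gadj (T k)"
  proof
    fix k assume k: "k \<in> K"
    then obtain e i \<omega> where ke: "k = (e, i, \<omega>)" and e: "e \<in> R" and i: "i \<in> I" and w: "\<omega> \<in> bohr ev"
      unfolding K_def by auto
    obtain j where j: "j \<in> I" "S e j = adj (S e i)" using S_adj e i R by blast
    have "(e, j, - \<omega>) \<in> K" unfolding K_def using e j w bohr_uminus by auto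
    then show "\<exists>k'\<in>K. T k' = gadj (T k)" using Tadj[OF j(2)] ke by blast
  qed
  have p1: "X \<in> op_kernel \<Lambda> (lindblad \<Lambda> ev P I S h R) \<longleftrightarrow> X \<in> commutant \<Lambda> (T ` K)" for X
    proof (cases "X \<in> ops \<Lambda>")
      case True
      then have Xg: "gops ?D X" unfolding ops_gops .
      show ?thesis unfolding op_kernel_def commutant_def lind opmul_gmul
        using gLind_iff[OF finD finK Tops cpos adjc Xg] True by auto
    next
      case False then show ?thesis unfolding op_kernel_def commutant_def by auto
    qed
  have part1: "op_kernel \<Lambda> (lindblad \<Lambda> ev P I S h R) = commutant \<Lambda> (T ` K)"
    using p1 by blast
  let ?C2 = "{freq \<Lambda> ev P Q \<omega> | Q \<omega>. Q \<in> local_ops \<Lambda> R \<and> \<omega> \<in> bohr ev}"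
  have sub: "T ` K \<subseteq> ?C2"
  proof
    fix t assume "t \<in> T ` K"
    then obtain e i \<omega> where t: "t = T (e, i, \<omega>)" and e: "e \<in> R" and i: "i \<in> I" and w: "\<omega> \<in> bohr ev"
      unfolding K_def by auto
    have "embed \<Lambda> R (embed R {e} (S e i)) = embed \<Lambda> {e} (S e i)" by (rule embed_embed[OF e R])
    moreover have "embed \<Lambda> R (embed R {e} (S e i)) \<in> local_ops \<Lambda> R"
      unfolding local_ops_def using embed_ops by blast
    ultimately show "t \<in> ?C2" using t w unfolding T_def by auto
  qed
  have cX: "gmul ?D X (gfreq ?D ev P (embed \<Lambda> {e} (S e i)) \<omega>) = gmul ?D (gfreq ?D ev P (embed \<Lambda> {e} (S e i)) \<omega>) X"
    if X: "X \<in> commutant \<Lambda> (T ` K)" and e: "e \<in> R" and i: "i \<in> I" and w: "\<omega> \<in> bohr ev" for X e i \<omega>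
  proof -
    have "(e, i, \<omega>) \<in> K" unfolding K_def using e i w by simp
    then show ?thesis using X unfolding commutant_def T_def opmul_gmul freq_gfreq by force
  qed
  have part2: "commutant \<Lambda> (T ` K) \<subseteq> commutant \<Lambda> ?C2"
  proof
    fix X assume X: "X \<in> commutant \<Lambda> (T ` K)"
    then have Xops: "X \<in> ops \<Lambda>" unfolding commutant_def by auto
    define Xs where "Xs = {X, gadj X}"
    have Xs_ops: "\<forall>Z\<in>Xs. gops ?D Z" unfolding Xs_def using Xops ops_gops gops_gadj by auto
    have Xs_adj: "\<forall>Z\<in>Xs. gadj Z \<in> Xs" unfolding Xs_def by auto
    have single: "\<forall>s. embed \<Lambda> {e} s \<in> sp.galg Xs" if e: "e \<in> R" for e
    proof -
      define M where "M = {s. gops (conf {e}) s \<and> embed \<Lambda> {e} s \<in> sp.galg Xs}"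
      have eL: "e \<in> \<Lambda>" using e R by auto
      have eS: "{e} \<subseteq> \<Lambda>" using eL by simp
      have finDe: "finite (conf {e} :: (edge \<Rightarrow> 'g) set)" by (rule finite_conf) simp
      have SM: "S e i \<in> M" if i: "i \<in> I" for i
      proof -
        have gS: "gops (conf {e}) (S e i)" using S_ops eL i ops_gops by blast
        have "gmul ?D Z (gfreq ?D ev P (embed \<Lambda> {e} (S e i)) \<omega>) = gmul ?D (gfreq ?D ev P (embed \<Lambda> {e} (S e i)) \<omega>) Z"
          if Z: "Z \<in> Xs" for Z \<omega>
        proof (cases "\<omega> \<in> bohr ev")
          case False
          then show ?thesis by (simp add: sp.gfreq_nonbohr gmul_zero_left gmul_zero_right)
        next
          case True
          show ?thesis
          proof (cases "Z = X")
            case True then show ?thesis using cX[OF X e i \<open>\<omega> \<in> bohr ev\<close>] by simp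
          next
            case False
            then have ZX: "Z = gadj X" using Z unfolding Xs_def by auto
            obtain j where j: "j \<in> I" "S e j = adj (S e i)" using S_adj eL i by blast
            let ?F = "gfreq ?D ev P (embed \<Lambda> {e} (S e i)) \<omega>"
            have "T (e, j, - \<omega>) = gadj ?F" using Tadj[OF j(2)] unfolding T_def freq_gfreq by simp
            then have "gadj ?F = gfreq ?D ev P (embed \<Lambda> {e} (S e j)) (- \<omega>)" unfolding T_def freq_gfreq by simp
            then have c1: "gmul ?D X (gadj ?F) = gmul ?D (gadj ?F) X"
              using cX[OF X e j(1) bohr_uminus[OF True]] by simp
            have "gmul ?D (gadj X) ?F = gadj (gmul ?D (gadj ?F) X)" by (simp add: gadj_gmul)
            also have "\<dots> = gadj (gmul ?D X (gadj ?F))" using c1 by simp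
            also have "\<dots> = gmul ?D ?F (gadj X)" by (simp add: gadj_gmul)
            finally show ?thesis using ZX by simp
          qed
        qed
        then show ?thesis unfolding M_def sp.galg_def using gS embed_ops[of \<Lambda> "{e}" "S e i"] ops_gops by auto
      qed
      have "\<forall>Y. gops (conf {e}) Y \<longrightarrow> Y \<in> M"
      proof (rule full_alg[OF finDe])
        show "\<forall>m\<in>M. gops (conf {e}) m" by (simp add: M_def)
        have z: "embed \<Lambda> {e} (\<lambda>x y. 0) = (\<lambda>x y. 0)" unfolding embed_def by simp
        show "(\<lambda>x y. 0) \<in> M" unfolding M_def mem_Collect_eq z using sp.galg_zero by (simp add: gops_def)
        show "\<forall>u\<in>M. \<forall>v\<in>M. (\<lambda>x y. u x y + v x y) \<in> M"
        proof (intro ballI)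
          fix u v assume u: "u \<in> M" and v: "v \<in> M"
          have "embed \<Lambda> {e} (\<lambda>x y. 1 * u x y + 1 * v x y) \<in> sp.galg Xs"
            unfolding embed_lin using u v unfolding M_def by (intro sp.galg_lin) auto
          then show "(\<lambda>x y. u x y + v x y) \<in> M" using u v unfolding M_def gops_def by simp
        qed
        show "\<forall>c. \<forall>u\<in>M. (\<lambda>x y. c * u x y) \<in> M"
        proof (intro allI ballI)
          fix c u assume u: "u \<in> M"
          have "embed \<Lambda> {e} (\<lambda>x y. c * u x y + 0 * u x y) \<in> sp.galg Xs"
            unfolding embed_lin using u unfolding M_def by (intro sp.galg_lin) auto
          then show "(\<lambda>x y. c * u x y) \<in> M" using u unfolding M_def gops_def by simp
        qed
        have "embed \<Lambda> {e} (gid (conf {e})) = gid ?D"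
          using embed_id[OF eS] unfolding idop_gid .
        then show "gid (conf {e}) \<in> M" unfolding M_def using sp.galg_gid[OF Xs_ops]
          by (simp add: gops_def gid_def)
        show "\<forall>u\<in>M. \<forall>v\<in>M. gmul (conf {e}) u v \<in> M"
        proof (intro ballI)
          fix u v assume u: "u \<in> M" and v: "v \<in> M"
          have "embed \<Lambda> {e} (gmul (conf {e}) u v) = gmul ?D (embed \<Lambda> {e} u) (embed \<Lambda> {e} v)"
            using embed_mul[OF eS finL] unfolding opmul_gmul .
          then have "embed \<Lambda> {e} (gmul (conf {e}) u v) \<in> sp.galg Xs"
            using u v sp.galg_mul unfolding M_def by simp
          then show "gmul (conf {e}) u v \<in> M" using u v unfolding M_def by (simp add: gops_gmul)
        qed
        show "\<forall>u\<in>M. gadj u \<in> M"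
        proof
          fix u assume u: "u \<in> M"
          have "embed \<Lambda> {e} (gadj u) = gadj (embed \<Lambda> {e} u)" using embed_adj unfolding adj_gadj by metis
          then have "embed \<Lambda> {e} (gadj u) \<in> sp.galg Xs" using u sp.galg_adj[OF _ Xs_adj] unfolding M_def by simp
          then show "gadj u \<in> M" using u unfolding M_def by (simp add: gops_gadj)
        qed
        show "\<forall>Z. gops (conf {e}) Z \<longrightarrow> (\<forall>m\<in>M. gmul (conf {e}) Z m = gmul (conf {e}) m Z)
               \<longrightarrow> (\<exists>\<kappa>. Z = (\<lambda>x y. \<kappa> * gid (conf {e}) x y))"
        proof (intro allI impI)
          fix Z assume Zg: "gops (conf {e}) Z" and Zc: "\<forall>m\<in>M. gmul (conf {e}) Z m = gmul (conf {e}) m Z"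
          have "Z \<in> ops {e}" using Zg ops_gops by blast
          moreover have "\<forall>i\<in>I. opmul {e} Z (S e i) = opmul {e} (S e i) Z"
            using Zc SM unfolding opmul_gmul by blast
          ultimately obtain \<kappa> where "Z = (\<lambda>x y. \<kappa> * idop {e} x y)" using S_comm eL by blast
          then show "\<exists>\<kappa>. Z = (\<lambda>x y. \<kappa> * gid (conf {e}) x y)" unfolding idop_gid by blast
        qed
      qed
      then have allM: "Y \<in> M" if "gops (conf {e}) Y" for Y using that by blast
      show ?thesis
      proof
        fix s :: "'g op"
        define s' where "s' = (\<lambda>a b. if a \<in> conf {e} \<and> b \<in> conf {e} then s a b else 0)"
        have "gops (conf {e}) s'" unfolding s'_def gops_def by auto
        then have "s' \<in> M" by (rule allM)
        moreover have "embed \<Lambda> {e} s' = embed \<Lambda> {e} s"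
          unfolding embed_def s'_def using restr_conf by (intro ext) auto
        ultimately show "embed \<Lambda> {e} s \<in> sp.galg Xs" unfolding M_def by simp
      qed
    qed
    have multi: "R' \<subseteq> R \<longrightarrow> (\<forall>Q. embed \<Lambda> R' Q \<in> sp.galg Xs)" if fR': "finite R'" for R'
      using fR'
    proof (induction R' rule: finite_induct)
      case empty
      show ?case
      proof (intro impI allI)
        fix Q :: "'g op"
        have "(\<lambda>x y. Q (\<lambda>_. 0) (\<lambda>_. 0) * gid ?D x y + 0 * gid ?D x y) \<in> sp.galg Xs"
          by (intro sp.galg_lin sp.galg_gid[OF Xs_ops])
        then show "embed \<Lambda> {} Q \<in> sp.galg Xs" unfolding embed_empty idop_gid by simp
      qed
    next
      case (insert e F)
      show ?case
      proof (intro impI allI)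
        fix Q :: "'g op"
        assume sub: "insert e F \<subseteq> R"
        have IH: "\<forall>Q. embed \<Lambda> F Q \<in> sp.galg Xs" using insert sub by blast
        have eR: "e \<in> R" using sub by blast
        have eFL: "insert e F \<subseteq> \<Lambda>" using sub R by blast
        define G where "G g g' = gmul ?D (embed \<Lambda> {e} (munit (upd0 e g) (upd0 e g')))
            (embed \<Lambda> F (\<lambda>a b. Q (a(e := g)) (b(e := g'))))" for g g' :: 'g
        have Gin: "G g g' \<in> sp.galg Xs" for g g'
          unfolding G_def using single[OF eR] IH by (intro sp.galg_mul) auto
        have inner: "(\<lambda>x y. \<Sum>g'\<in>UNIV. 1 * G g g' x y) \<in> sp.galg Xs" for g
          using Gin by (intro sp.galg_sum) auto
        have "(\<lambda>x y. \<Sum>g\<in>UNIV. 1 * (\<lambda>x y. \<Sum>g'\<in>UNIV. 1 * G g g' x y) x y) \<in> sp.galg Xs"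
          using inner by (intro sp.galg_sum[where F = "\<lambda>g. (\<lambda>x y. \<Sum>g'\<in>UNIV. 1 * G g g' x y)"]) auto
        moreover have "embed \<Lambda> (insert e F) Q = (\<lambda>x y. \<Sum>g\<in>UNIV. 1 * (\<lambda>x y. \<Sum>g'\<in>UNIV. 1 * G g g' x y) x y)"
          unfolding embed_split[OF insert(2) eFL finL] G_def opmul_gmul by simp
        ultimately show "embed \<Lambda> (insert e F) Q \<in> sp.galg Xs" by simp
      qed
    qed
    have allQ: "embed \<Lambda> R Q \<in> sp.galg Xs" for Q using multi[OF finR] by blast
    show "X \<in> commutant \<Lambda> ?C2"
      unfolding commutant_def
    proof (intro CollectI conjI ballI)
      show "X \<in> ops \<Lambda>" by (rule Xops)
      fix t assume "t \<in> ?C2"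
      then obtain Q \<omega> where t: "t = freq \<Lambda> ev P Q \<omega>" and Q: "Q \<in> local_ops \<Lambda> R" by blast
      obtain Q0 where Q0: "Q = embed \<Lambda> R Q0" using Q unfolding local_ops_def by blast
      have "Q \<in> sp.galg Xs" using allQ Q0 by simp
      then show "opmul \<Lambda> X t = opmul \<Lambda> t X"
        unfolding t sp.galg_def opmul_gmul freq_gfreq Xs_def by blast
    qed
  qed
  have part2': "commutant \<Lambda> ?C2 \<subseteq> commutant \<Lambda> (T ` K)"
    using sub unfolding commutant_def by blast
  show ?thesis unfolding C1eq using part1 part2 part2' by blast
qed


end
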